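(* Let $\bar t>0$, $I=(0,\bar t)$, let $\gamma_1,\gamma_2\in\mathrm{Lip}(I)$ (extended continuously to $\bar I$) with $\gamma_1<0<\gamma_2$ on $I$, $\gamma_1(0)=\gamma_1(\bar t)=\gamma_2(0)=\gamma_2(\bar t)=0$, $\gamma_1$ convex and $\gamma_2$ concave, and let $D=\{(y,t)\in\mathbb W: t\in I,\ \gamma_1(t)<y<\gamma_2(t)\}$. Let $\phi:\partial D\to\mathbb R$ be continuous with $\phi_1,\phi_2\in\mathrm{Lip}(I)$, and assume $$\zeta<\frac{\sqrt{129}-11}{4}.$$ Then there exists $u:\bar D\to\mathbb R$ such that: (i) $R_\phi=S_u=\{(u(y,t),y,t+2yu(y,t)):(y,t)\in D\}$; (ii) $u$ is Lipschitz continuous on $\bar D$; (iii) $u=\phi$ on $\partial D$.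
   Context: $\mathbb H$ is $\mathbb R^3$ with product $(x,y,t)\cdot(\xi,\eta,\tau)=(x+\xi,y+\eta,t+\tau+2(y\xi-x\eta))$; $X=\partial_x+2y\partial_t$, $Y=\partial_y-2x\partial_t$, $H_p=\mathrm{span}\{X(p),Y(p)\}$. $\mathbb W=\{x=0\}$ with coordinates $(y,t)$. Set $\phi_i(s)=\phi(\gamma_i(s),s)$, $\|\gamma\|_\infty=\max_i\|\gamma_i\|_\infty$, $\mathrm{Lip}(\gamma)=\max_i\mathrm{Lip}(\gamma_i)$, $\|\phi\|_\infty=\max_i\|\phi_i\|_\infty$, $\mathrm{Lip}(\phi)=\max_i\mathrm{Lip}(\phi_i)$, $\zeta=4(\|\gamma\|_\infty+\mathrm{Lip}(\gamma))(\|\phi\|_\infty+\mathrm{Lip}(\phi))$, $p_i(s)=(\phi_i(s),\gamma_i(s),s+2\gamma_i(s)\phi_i(s))$. For $\zeta<1$, $\lambda(s)$ denotes the unique point of $\bar I$ with $p_2(\lambda(s))-p_1(s)\in H_{p_1(s)}$ (equivalently $\lambda(s)-s+2(\gamma_2(\lambda(s))-\gamma_1(s))(\phi_2(\lambda(s))+\phi_1(s))=0$); $\lambda$ is increasing and bi-Lipschitz with $\lambda(0)=0$, $\lambda(\bar t)=\bar t$. Define $\rho(h,s)=(1-h)p_1(s)+h\,p_2(\lambda(s))$ for $(h,s)\in Q=(0,1)\times I$ and $R_\phi=\rho(Q)$. *)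

theory Defs
  imports "HOL-Analysis.Analysis"
begin

text \<open>Points of the Heisenberg group are triples (x,y,t) :: real \<times> real \<times> real.
  Points of W = {x=0} are pairs (y,t).\<close>

definition hplane :: "real \<times> real \<times> real \<Rightarrow> (real \<times> real \<times> real) set" where
  "hplane p = (case p of (x, y, t) \<Rightarrow> span {(1, 0, 2 * y), (0, 1, - 2 * x)})"

definition domD :: "real \<Rightarrow> (real \<Rightarrow> real) \<Rightarrow> (real \<Rightarrow> real) \<Rightarrow> (real \<times> real) set" where
  "domD tb g1 g2 = {(y, t). t \<in> {0<..<tb} \<and> g1 t < y \<and> y < g2 t}"

definition sup_norm :: "real \<Rightarrow> (real \<Rightarrow> real) \<Rightarrow> real" where
  "sup_norm tb f = Sup ((\<lambda>s. \<bar>f s\<bar>) ` {0<..<tb})"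

definition lip_const :: "real \<Rightarrow> (real \<Rightarrow> real) \<Rightarrow> real" where
  "lip_const tb f = Inf {L. lipschitz_on L {0<..<tb} f}"

definition phi_i :: "(real \<times> real \<Rightarrow> real) \<Rightarrow> (real \<Rightarrow> real) \<Rightarrow> real \<Rightarrow> real" where
  "phi_i phi g s = phi (g s, s)"

definition zeta :: "real \<Rightarrow> (real \<Rightarrow> real) \<Rightarrow> (real \<Rightarrow> real) \<Rightarrow> (real \<times> real \<Rightarrow> real) \<Rightarrow> real" where
  "zeta tb g1 g2 phi =
     4 * (max (sup_norm tb g1) (sup_norm tb g2) + max (lip_const tb g1) (lip_const tb g2))
       * (max (sup_norm tb (phi_i phi g1)) (sup_norm tb (phi_i phi g2))
          + max (lip_const tb (phi_i phi g1)) (lip_const tb (phi_i phi g2)))"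

definition p_i :: "(real \<times> real \<Rightarrow> real) \<Rightarrow> (real \<Rightarrow> real) \<Rightarrow> real \<Rightarrow> real \<times> real \<times> real" where
  "p_i phi g s = (phi_i phi g s, g s, s + 2 * g s * phi_i phi g s)"

definition lam :: "real \<Rightarrow> (real \<Rightarrow> real) \<Rightarrow> (real \<Rightarrow> real) \<Rightarrow> (real \<times> real \<Rightarrow> real) \<Rightarrow> real \<Rightarrow> real" where
  "lam tb g1 g2 phi s = (THE l. l \<in> {0..tb} \<and>
      p_i phi g2 l - p_i phi g1 s \<in> hplane (p_i phi g1 s))"

definition rho :: "real \<Rightarrow> (real \<Rightarrow> real) \<Rightarrow> (real \<Rightarrow> real) \<Rightarrow> (real \<times> real \<Rightarrow> real) \<Rightarrow> real \<Rightarrow> real \<Rightarrow> real \<times> real \<times> real" where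
  "rho tb g1 g2 phi h s = (1 - h) *\<^sub>R p_i phi g1 s + h *\<^sub>R p_i phi g2 (lam tb g1 g2 phi s)"

definition R_phi :: "real \<Rightarrow> (real \<Rightarrow> real) \<Rightarrow> (real \<Rightarrow> real) \<Rightarrow> (real \<times> real \<Rightarrow> real) \<Rightarrow> (real \<times> real \<times> real) set" where
  "R_phi tb g1 g2 phi = {rho tb g1 g2 phi h s | h s. h \<in> {0<..<1} \<and> s \<in> {0<..<tb}}"

definition S_u :: "(real \<times> real) set \<Rightarrow> (real \<times> real \<Rightarrow> real) \<Rightarrow> (real \<times> real \<times> real) set" where
  "S_u D u = {(u (y, t), y, t + 2 * y * u (y, t)) | y t. (y, t) \<in> D}"

end

theory Submission
  imports Defs
begin

lemma dist_pair_le: "dist (a::real, b::real) (c, d) \<le> \<bar>a - c\<bar> + \<bar>b - d\<bar>"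
  by (simp add: dist_Pair_Pair dist_real_def sqrt_sum_squares_le_sum_abs)

lemma abs_prod_le: "\<bar>x::real\<bar> \<le> a \<Longrightarrow> \<bar>y\<bar> \<le> b \<Longrightarrow> \<bar>x*y\<bar> \<le> a*b"
  by (simp add: abs_mult mult_mono order_trans[OF abs_ge_zero])

lemma approx_lip:
  fixes f g :: "'a::metric_space \<Rightarrow> real"
  assumes L: "0 \<le> L" and fl: "\<forall>x\<in>B. \<forall>y\<in>B. dist (f x) (f y) \<le> L * dist x y"
    and ap: "\<forall>x\<in>A. \<forall>e>0. \<exists>x'\<in>B. dist x' x < e \<and> dist (f x') (g x) < e"
  shows "lipschitz_on L A g"
  unfolding lipschitz_on_def
proof (intro conjI L ballI)
  fix x y assume x: "x\<in>A" and y: "y\<in>A"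
  show "dist (g x) (g y) \<le> L * dist x y"
  proof (rule field_le_epsilon)
    fix e :: real assume e: "0 < e"
    define e' where "e' = e / (2 + 2*L)"
    have e': "0 < e'" using e L by (simp add: e'_def)
    have ee: "e' * (2 + 2*L) = e" using L by (simp add: e'_def)
    obtain x' where x': "x'\<in>B" "dist x' x < e'" "dist (f x') (g x) < e'" using ap x e' by blast
    obtain y' where y': "y'\<in>B" "dist y' y < e'" "dist (f y') (g y) < e'" using ap y e' by blast
    have t1: "dist (g x) (g y) \<le> dist (g x) (f x') + dist (f x') (g y)" by (rule dist_triangle)
    have t2: "dist (f x') (g y) \<le> dist (f x') (f y') + dist (f y') (g y)" by (rule dist_triangle)
    have t3: "dist x' y' \<le> dist x' x + dist x y'" by (rule dist_triangle)
    have t4: "dist x y' \<le> dist x y + dist y y'" by (rule dist_triangle)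
    have f1: "dist (f x') (f y') \<le> L * dist x' y'" using fl x' y' by blast
    have "dist x' y' \<le> e' + dist x y + e'" using t3 t4 x' y' by (simp add: dist_commute)
    then have "L * dist x' y' \<le> L * (e' + dist x y + e')"
      using L by (rule mult_left_mono)
    moreover have "dist (g x) (f x') < e'" using x' by (simp add: dist_commute)
    ultimately have "dist (g x) (g y) \<le> e' + L * (e' + dist x y + e') + e'"
      using t1 t2 f1 y' by linarith
    then show "dist (g x) (g y) \<le> L * dist x y + e"
      using ee by (simp add: algebra_simps)
  qed
qed

lemma convex_real:
  fixes g :: "real \<Rightarrow> real"
  assumes "convex_on {0..tb} g" "x \<in> {0..tb}" "y \<in> {0..tb}" "0 \<le> th" "th \<le> 1"
  shows "g ((1 - th) * x + th * y) \<le> (1 - th) * g x + th * g y"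
  using assms unfolding convex_on_def by simp

lemma convex_strict:
  fixes g :: "real \<Rightarrow> real"
  assumes cv: "convex_on {0..tb} g" and p: "p \<in> {0..tb}" and q: "q \<in> {0..tb}"
    and gp: "g p \<le> y" and gq: "g q < y"
    and r: "(p < r \<and> r < q) \<or> (q < r \<and> r < p)"
  shows "g r < y"
proof -
  define th where "th = (r - p) / (q - p)"
  have pq: "q - p \<noteq> 0" using r by auto
  have th0: "0 < th" and th1: "th < 1" using r by (auto simp: th_def field_simps)
  have "th * (q - p) = r - p" using pq by (simp add: th_def)
  then have req: "r = (1 - th) * p + th * q" by (simp add: algebra_simps)
  have "g r \<le> (1 - th) * g p + th * g q"
    unfolding req by (rule convex_real[OF cv p q]) (use th0 th1 in auto)
  also have "(1 - th) * g p \<le> (1 - th) * y" using th1 gp by (intro mult_left_mono) auto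
  also have "th * g q < th * y" using th0 gq by simp
  finally show ?thesis by (simp add: algebra_simps)
qed

locale heis =
  fixes tb :: real and g1 g2 f1 f2 :: "real \<Rightarrow> real" and G Lg P Lp :: real
  assumes tb: "0 < tb"
  and g1c: "continuous_on {0..tb} g1" and g2c: "continuous_on {0..tb} g2"
  and f1c: "continuous_on {0..tb} f1" and f2c: "continuous_on {0..tb} f2"
  and gb: "\<And>s. s \<in> {0..tb} \<Longrightarrow> \<bar>g1 s\<bar> \<le> G \<and> \<bar>g2 s\<bar> \<le> G"
  and fb: "\<And>s. s \<in> {0..tb} \<Longrightarrow> \<bar>f1 s\<bar> \<le> P \<and> \<bar>f2 s\<bar> \<le> P"
  and gL: "\<And>x y. x \<in> {0..tb} \<Longrightarrow> y \<in> {0..tb} \<Longrightarrow>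
              \<bar>g1 x - g1 y\<bar> \<le> Lg * \<bar>x - y\<bar> \<and> \<bar>g2 x - g2 y\<bar> \<le> Lg * \<bar>x - y\<bar>"
  and fL: "\<And>x y. x \<in> {0..tb} \<Longrightarrow> y \<in> {0..tb} \<Longrightarrow>
              \<bar>f1 x - f1 y\<bar> \<le> Lp * \<bar>x - y\<bar> \<and> \<bar>f2 x - f2 y\<bar> \<le> Lp * \<bar>x - y\<bar>"
  and ends: "g1 0 = 0" "g1 tb = 0" "g2 0 = 0" "g2 tb = 0" "f1 0 = f2 0" "f1 tb = f2 tb"
  and sign: "\<And>t. t \<in> {0<..<tb} \<Longrightarrow> g1 t < 0 \<and> 0 < g2 t"
  and cvx: "convex_on {0..tb} g1" and ccv: "concave_on {0..tb} g2"
  and nonneg: "0 \<le> G" "0 \<le> Lg" "0 \<le> P" "0 \<le> Lp"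
  and small: "4 * (Lg * P + G * Lp) \<le> 1/10"
begin

lemma g1_nonpos: "s \<in> {0..tb} \<Longrightarrow> g1 s \<le> 0"
  using sign[of s] ends by (cases "s = 0 \<or> s = tb") force+

lemma g2_nonneg: "s \<in> {0..tb} \<Longrightarrow> 0 \<le> g2 s"
  using sign[of s] ends by (cases "s = 0 \<or> s = tb") force+

lemma cvx2: "convex_on {0..tb} (\<lambda>x. - g2 x)"
  using ccv by (simp add: concave_on_def)

definition FF where "FF s l = l - s + 2 * (g2 l - g1 s) * (f2 l + f1 s)"

lemma FF_est:
  assumes s1: "s1 \<in> {0..tb}" and s2: "s2 \<in> {0..tb}" and l1: "l1 \<in> {0..tb}" and l2: "l2 \<in> {0..tb}"
  shows "\<bar>(FF s2 l2 - FF s1 l1) - ((l2 - l1) - (s2 - s1))\<bar>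
           \<le> 4 * (Lg * P + G * Lp) * (\<bar>l2 - l1\<bar> + \<bar>s2 - s1\<bar>)"
proof -
  define A where "A = (g2 l2 - g2 l1) - (g1 s2 - g1 s1)"
  define B where "B = f2 l2 + f1 s2"
  define C where "C = g2 l1 - g1 s1"
  define D where "D = (f2 l2 - f2 l1) + (f1 s2 - f1 s1)"
  have eq: "(FF s2 l2 - FF s1 l1) - ((l2 - l1) - (s2 - s1)) = 2 * (A * B + C * D)"
    by (simp add: FF_def A_def B_def C_def D_def algebra_simps)
  have a1: "\<bar>g2 l2 - g2 l1\<bar> \<le> Lg * \<bar>l2 - l1\<bar>" using gL[OF l2 l1] by simp
  have a2: "\<bar>g1 s2 - g1 s1\<bar> \<le> Lg * \<bar>s2 - s1\<bar>" using gL[OF s2 s1] by simp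
  have A: "\<bar>A\<bar> \<le> Lg * (\<bar>l2 - l1\<bar> + \<bar>s2 - s1\<bar>)"
    using a1 a2 unfolding A_def distrib_left by linarith
  have B: "\<bar>B\<bar> \<le> 2 * P" using fb[OF l2] fb[OF s2] unfolding B_def by linarith
  have C: "\<bar>C\<bar> \<le> 2 * G" using gb[OF l1] gb[OF s1] unfolding C_def by linarith
  have d1: "\<bar>f2 l2 - f2 l1\<bar> \<le> Lp * \<bar>l2 - l1\<bar>" using fL[OF l2 l1] by simp
  have d2: "\<bar>f1 s2 - f1 s1\<bar> \<le> Lp * \<bar>s2 - s1\<bar>" using fL[OF s2 s1] by simp
  have D: "\<bar>D\<bar> \<le> Lp * (\<bar>l2 - l1\<bar> + \<bar>s2 - s1\<bar>)"
    using d1 d2 unfolding D_def distrib_left by linarith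
  have AB: "\<bar>A * B\<bar> \<le> Lg * (\<bar>l2 - l1\<bar> + \<bar>s2 - s1\<bar>) * (2 * P)" by (rule abs_prod_le[OF A B])
  have CD: "\<bar>C * D\<bar> \<le> (2 * G) * (Lp * (\<bar>l2 - l1\<bar> + \<bar>s2 - s1\<bar>))" by (rule abs_prod_le[OF C D])
  have "\<bar>2 * (A * B + C * D)\<bar> \<le> 2 * (\<bar>A * B\<bar> + \<bar>C * D\<bar>)" by simp
  also have "\<dots> \<le> 2 * (Lg * (\<bar>l2 - l1\<bar> + \<bar>s2 - s1\<bar>) * (2 * P) + (2 * G) * (Lp * (\<bar>l2 - l1\<bar> + \<bar>s2 - s1\<bar>)))"
    using AB CD by simp
  also have "\<dots> = 4 * (Lg * P + G * Lp) * (\<bar>l2 - l1\<bar> + \<bar>s2 - s1\<bar>)" by (simp add: algebra_simps)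
  finally show ?thesis unfolding eq .
qed

lemma z_le: "4 * (Lg * P + G * Lp) * x \<le> x / 10" if "0 \<le> x" for x
  using mult_right_mono[OF small that] by simp

lemma FF_mono:
  assumes s: "s \<in> {0..tb}" and l1: "l1 \<in> {0..tb}" and l2: "l2 \<in> {0..tb}" and lt: "l1 < l2"
  shows "FF s l1 < FF s l2"
proof -
  define k where "k = 4 * (Lg * P + G * Lp) * (l2 - l1)"
  have "\<bar>(FF s l2 - FF s l1) - (l2 - l1)\<bar> \<le> k"
    using FF_est[OF s s l1 l2] lt by (simp add: k_def)
  moreover have "k \<le> (l2 - l1) / 10" unfolding k_def by (rule z_le) (use lt in simp)
  ultimately have "FF s l2 - FF s l1 - (l2 - l1) \<ge> - k" "k \<le> (l2 - l1) / 10" by auto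
  then show ?thesis using lt by argo
qed

lemma FF_cont: "continuous_on {0..tb} (FF s)"
  unfolding FF_def by (intro continuous_intros g2c f2c)


lemma FF_0: assumes s: "s \<in> {0..tb}" shows "FF s 0 \<le> 0"
proof -
  define E where "E = (0 - g1 s) * (f2 0 + f1 s)"
  have g: "\<bar>0 - g1 s\<bar> \<le> Lg * s" using gL[OF s, of 0] ends s by simp
  have f: "\<bar>f2 0 + f1 s\<bar> \<le> 2 * P" using fb[of 0] fb[OF s] tb by fastforce
  have E: "\<bar>E\<bar> \<le> (Lg * s) * (2 * P)" unfolding E_def by (rule abs_prod_le[OF g f])
  have z: "4 * (Lg * P + G * Lp) * s \<le> s / 10" using s by (intro z_le) simp
  have GL: "0 \<le> G * Lp * s" using nonneg s by simp
  have eq: "FF s 0 = - s + 2 * E" unfolding FF_def E_def using ends by simp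
  have "(Lg * s) * (2 * P) = 2 * (Lg * P * s)" "4 * (Lg * P + G * Lp) * s = 4 * (Lg * P * s) + 4 * (G * Lp * s)"
    by (simp_all add: algebra_simps)
  then show ?thesis using E z GL s eq unfolding abs_le_iff by argo
qed

lemma FF_tb: assumes s: "s \<in> {0..tb}" shows "0 \<le> FF s tb"
proof -
  define E where "E = (0 - g1 s) * (f2 tb + f1 s)"
  have g: "\<bar>0 - g1 s\<bar> \<le> Lg * (tb - s)" using gL[OF s, of tb] ends s tb by simp
  have f: "\<bar>f2 tb + f1 s\<bar> \<le> 2 * P" using fb[of tb] fb[OF s] tb by fastforce
  have E: "\<bar>E\<bar> \<le> (Lg * (tb - s)) * (2 * P)" unfolding E_def by (rule abs_prod_le[OF g f])
  have z: "4 * (Lg * P + G * Lp) * (tb - s) \<le> (tb - s) / 10" using s by (intro z_le) simp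
  have GL: "0 \<le> G * Lp * (tb - s)" using nonneg s by simp
  have eq: "FF s tb = tb - s + 2 * E" unfolding FF_def E_def using ends by simp
  have "(Lg * (tb - s)) * (2 * P) = 2 * (Lg * P * (tb - s))"
    "4 * (Lg * P + G * Lp) * (tb - s) = 4 * (Lg * P * (tb - s)) + 4 * (G * Lp * (tb - s))"
    by (simp_all add: algebra_simps)
  then show ?thesis using E z GL s eq unfolding abs_le_iff by argo
qed

lemma FF_ex1: assumes s: "s \<in> {0..tb}" shows "\<exists>!l. l \<in> {0..tb} \<and> FF s l = 0"
proof -
  have "\<exists>l\<ge>0. l \<le> tb \<and> FF s l = 0"
    by (rule IVT'[of "FF s" 0 0 tb]) (simp_all add: FF_0[OF s] FF_tb[OF s] FF_cont less_imp_le[OF tb])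
  then obtain l where l: "l \<in> {0..tb}" "FF s l = 0" by auto
  have "l' = l" if l': "l' \<in> {0..tb}" "FF s l' = 0" for l'
  proof (rule ccontr)
    assume "l' \<noteq> l"
    then have "l' < l \<or> l < l'" by linarith
    then show False
    proof
      assume "l' < l" then show False using FF_mono[OF s l'(1) l(1)] l l' by simp
    next
      assume "l < l'" then show False using FF_mono[OF s l(1) l'(1)] l l' by simp
    qed
  qed
  then show ?thesis using l by blast
qed

definition lm where "lm s = (THE l. l \<in> {0..tb} \<and> FF s l = 0)"

lemma lm: assumes "s \<in> {0..tb}" shows "lm s \<in> {0..tb}" "FF s (lm s) = 0"
  using theI'[OF FF_ex1[OF assms]] unfolding lm_def by auto

lemma lm_unique: assumes "s \<in> {0..tb}" "l \<in> {0..tb}" "FF s l = 0" shows "lm s = l"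
  using FF_ex1[OF assms(1)] lm[OF assms(1)] assms by auto

lemma lm_0: "lm 0 = 0"
proof (rule lm_unique)
  show "FF 0 0 = 0" unfolding FF_def using ends(1,3) by simp
qed (use tb in auto)

lemma lm_tb: "lm tb = tb"
proof (rule lm_unique)
  show "FF tb tb = 0" unfolding FF_def using ends(2,4) by simp
qed (use tb in auto)

lemma lm_est:
  assumes s1: "s1 \<in> {0..tb}" and s2: "s2 \<in> {0..tb}"
  shows "\<bar>lm s2 - lm s1\<bar> \<le> 2 * \<bar>s2 - s1\<bar>" "s1 < s2 \<Longrightarrow> lm s1 < lm s2"
    "s1 < s2 \<Longrightarrow> s2 - s1 \<le> 2 * (lm s2 - lm s1)"
proof -
  define dl where "dl = \<bar>lm s2 - lm s1\<bar>"
  define ds where "ds = \<bar>s2 - s1\<bar>"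
  define k1 where "k1 = 4 * (Lg * P + G * Lp) * dl"
  define k2 where "k2 = 4 * (Lg * P + G * Lp) * ds"
  have "\<bar>(FF s2 (lm s2) - FF s1 (lm s1)) - ((lm s2 - lm s1) - (s2 - s1))\<bar> \<le> k1 + k2"
    using FF_est[OF s1 s2 lm(1)[OF s1] lm(1)[OF s2]] unfolding k1_def k2_def dl_def ds_def
    by (simp add: algebra_simps)
  then have e: "\<bar>(lm s2 - lm s1) - (s2 - s1)\<bar> \<le> k1 + k2" using lm(2)[OF s1] lm(2)[OF s2] by simp
  have k1: "k1 \<le> dl / 10" unfolding k1_def by (rule z_le) (simp add: dl_def)
  have k2: "k2 \<le> ds / 10" unfolding k2_def by (rule z_le) (simp add: ds_def)
  have k1p: "0 \<le> k1" "0 \<le> k2" using nonneg by (simp_all add: k1_def k2_def dl_def ds_def)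
  show "\<bar>lm s2 - lm s1\<bar> \<le> 2 * \<bar>s2 - s1\<bar>"
    using e k1 k2 k1p unfolding dl_def ds_def by argo
  show "s1 < s2 \<Longrightarrow> lm s1 < lm s2"
    using e k1 k2 k1p unfolding dl_def ds_def by argo
  show "s1 < s2 \<Longrightarrow> s2 - s1 \<le> 2 * (lm s2 - lm s1)"
    using e k1 k2 k1p unfolding dl_def ds_def by argo
qed

lemma lm_mono: "s1 \<in> {0..tb} \<Longrightarrow> s2 \<in> {0..tb} \<Longrightarrow> s1 \<le> s2 \<Longrightarrow> lm s1 \<le> lm s2"
  using lm_est(2)[of s1 s2] by (cases "s1 = s2") auto

lemma lm_lip: "lipschitz_on 2 {0..tb} lm"
  unfolding lipschitz_on_def dist_real_def using lm_est(1) by auto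

lemma lm_cont: "continuous_on {0..tb} lm"
  by (rule lipschitz_on_continuous_on[OF lm_lip])

lemma lm_surj: assumes "l \<in> {0..tb}" shows "\<exists>s\<in>{0..tb}. lm s = l"
  using IVT'[of lm 0 l tb] lm_0 lm_tb assms tb lm_cont by auto

lemma lm_open: assumes "s \<in> {0<..<tb}" shows "lm s \<in> {0<..<tb}"
  using lm_est(2)[of 0 s] lm_est(2)[of s tb] lm_0 lm_tb assms by auto

lemma lm_id: assumes "s \<in> {0..tb}"
  shows "lm s = s - 2 * (g2 (lm s) - g1 s) * (f1 s + f2 (lm s))"
  using lm(2)[OF assms] unfolding FF_def by (simp add: algebra_simps)


lemma Q_lip1:
  fixes u1 u2 v :: real
  assumes "0 \<le> u1" "0 \<le> u2" "0 \<le> v"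
  shows "\<bar>u1\<^sup>2 / (u1 + v) - u2\<^sup>2 / (u2 + v)\<bar> \<le> \<bar>u1 - u2\<bar>"
proof (cases "v = 0")
  case True
  have "u\<^sup>2 / u = u" for u :: real by (cases "u = 0") (simp_all add: power2_eq_square)
  then show ?thesis using True by simp
next
  case False
  then have v: "0 < v" using assms by simp
  define N where "N = u1 * u2 + v * u1 + v * u2"
  define D where "D = (u1 + v) * (u2 + v)"
  have D: "0 < D" using assms v by (simp add: D_def)
  have eq: "u1\<^sup>2 / (u1 + v) - u2\<^sup>2 / (u2 + v) = (u1 - u2) * (N / D)"
    using assms v unfolding N_def D_def by (simp add: field_simps power2_eq_square)
  have r: "0 \<le> N / D" "N / D \<le> 1" using D assms v
    by (simp_all add: N_def D_def divide_le_eq_1 algebra_simps)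
  have "\<bar>(u1 - u2) * (N / D)\<bar> = \<bar>u1 - u2\<bar> * (N / D)" by (simp only: abs_mult abs_of_nonneg[OF r(1)])
  also have "\<dots> \<le> \<bar>u1 - u2\<bar> * 1" using r by (intro mult_left_mono) auto
  finally show ?thesis using eq by simp
qed

lemma Q_lip2:
  fixes u v1 v2 :: real
  assumes "0 \<le> u" "0 \<le> v1" "0 \<le> v2"
  shows "\<bar>u\<^sup>2 / (u + v1) - u\<^sup>2 / (u + v2)\<bar> \<le> \<bar>v1 - v2\<bar>"
proof (cases "u = 0")
  case True then show ?thesis by simp
next
  case False
  then have u: "0 < u" using assms by simp
  define D where "D = (u + v1) * (u + v2)"
  have D: "0 < D" using assms u by (simp add: D_def)
  have eq: "u\<^sup>2 / (u + v1) - u\<^sup>2 / (u + v2) = (v2 - v1) * (u\<^sup>2 / D)"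
    using assms u unfolding D_def by (simp add: field_simps power2_eq_square)
  have r: "0 \<le> u\<^sup>2 / D" "u\<^sup>2 / D \<le> 1" using D assms u
    by (simp_all add: D_def divide_le_eq_1 algebra_simps power2_eq_square)
  have "\<bar>(v2 - v1) * (u\<^sup>2 / D)\<bar> = \<bar>v2 - v1\<bar> * (u\<^sup>2 / D)" by (simp only: abs_mult abs_of_nonneg[OF r(1)])
  also have "\<dots> \<le> \<bar>v2 - v1\<bar> * 1" using r by (intro mult_left_mono) auto
  finally show ?thesis using eq by simp
qed

lemma Q_lip:
  fixes u1 u2 v1 v2 :: real
  assumes "0 \<le> u1" "0 \<le> u2" "0 \<le> v1" "0 \<le> v2"
  shows "\<bar>u2\<^sup>2 / (u2 + v2) - u1\<^sup>2 / (u1 + v1)\<bar> \<le> \<bar>u2 - u1\<bar> + \<bar>v2 - v1\<bar>"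
proof -
  have "\<bar>u2\<^sup>2 / (u2 + v2) - u2\<^sup>2 / (u2 + v1)\<bar> \<le> \<bar>v2 - v1\<bar>" using Q_lip2 assms by blast
  moreover have "\<bar>u2\<^sup>2 / (u2 + v1) - u1\<^sup>2 / (u1 + v1)\<bar> \<le> \<bar>u2 - u1\<bar>" using Q_lip1 assms by blast
  ultimately show ?thesis by argo
qed

lemma Q_le:
  fixes u v :: real
  assumes "0 \<le> u" "0 \<le> v"
  shows "0 \<le> u\<^sup>2 / (u + v)" "u\<^sup>2 / (u + v) \<le> u"
proof -
  show "0 \<le> u\<^sup>2 / (u + v)" using assms by simp
  show "u\<^sup>2 / (u + v) \<le> u"
  proof (cases "u = 0")
    case False
    then have "0 < u + v" using assms by simp
    then show ?thesis using assms by (simp add: divide_le_eq power2_eq_square algebra_simps)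
  qed simp
qed

definition Sg where "Sg s = g2 (lm s) - g1 s"
definition W where "W s = f2 (lm s) - f1 s"
definition Tf where "Tf y s = s - 4 * (y - g1 s) * f1 s - 2 * ((y - g1 s)\<^sup>2 / Sg s) * W s"
definition Xf where "Xf y s = f1 s + W s * ((y - g1 s) / Sg s)"
definition valid where "valid y s \<longleftrightarrow> s \<in> {0..tb} \<and> g1 s \<le> y \<and> y \<le> g2 (lm s)"

lemma T_est:
  assumes v1: "valid y1 s1" and v2: "valid y2 s2"
  shows "\<bar>(Tf y2 s2 - Tf y1 s1) - (s2 - s1)\<bar> \<le> \<bar>s2 - s1\<bar> / 2 + 12 * P * \<bar>y2 - y1\<bar>"
proof -
  have s1: "s1 \<in> {0..tb}" and s2: "s2 \<in> {0..tb}" using v1 v2 by (auto simp: valid_def)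
  have l1: "lm s1 \<in> {0..tb}" and l2: "lm s2 \<in> {0..tb}" using lm(1) s1 s2 by auto
  define U1 where "U1 = y1 - g1 s1"
  define U2 where "U2 = y2 - g1 s2"
  define V1 where "V1 = g2 (lm s1) - y1"
  define V2 where "V2 = g2 (lm s2) - y2"
  define Q1 where "Q1 = U1\<^sup>2 / (U1 + V1)"
  define Q2 where "Q2 = U2\<^sup>2 / (U2 + V2)"
  define a1 where "a1 = f1 s1"
  define a2 where "a2 = f1 s2"
  define W1 where "W1 = W s1"
  define W2 where "W2 = W s2"
  define ds where "ds = \<bar>s2 - s1\<bar>"
  define dy where "dy = \<bar>y2 - y1\<bar>"
  have U1p: "0 \<le> U1" "0 \<le> V1" "0 \<le> U2" "0 \<le> V2" using v1 v2 by (auto simp: valid_def U1_def U2_def V1_def V2_def)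
  have T1: "Tf y1 s1 = s1 - 4 * U1 * a1 - 2 * Q1 * W1"
    unfolding Tf_def Sg_def U1_def Q1_def a1_def W1_def V1_def by simp
  have T2: "Tf y2 s2 = s2 - 4 * U2 * a2 - 2 * Q2 * W2"
    unfolding Tf_def Sg_def U2_def Q2_def a2_def W2_def V2_def by simp
  have eq: "(Tf y2 s2 - Tf y1 s1) - (s2 - s1) = - 4 * ((U2 - U1) * a2) - 4 * (U1 * (a2 - a1))
       - 2 * ((Q2 - Q1) * W2) - 2 * (Q1 * (W2 - W1))"
    unfolding T1 T2 by (simp add: algebra_simps)
  have gs: "\<bar>g1 s2 - g1 s1\<bar> \<le> Lg * ds" using gL[OF s2 s1] by (simp add: ds_def)
  have dl: "\<bar>lm s2 - lm s1\<bar> \<le> 2 * ds" using lm_est(1)[OF s1 s2] by (simp add: ds_def)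
  have gl: "\<bar>g2 (lm s2) - g2 (lm s1)\<bar> \<le> Lg * (2 * ds)"
    using gL[OF l2 l1] mult_left_mono[OF dl nonneg(2)] by linarith
  have dU: "\<bar>U2 - U1\<bar> \<le> dy + Lg * ds" using gs unfolding U1_def U2_def dy_def by linarith
  have dV: "\<bar>V2 - V1\<bar> \<le> dy + Lg * (2 * ds)" using gl unfolding V1_def V2_def dy_def by linarith
  have a2b: "\<bar>a2\<bar> \<le> P" using fb[OF s2] by (simp add: a2_def)
  have da: "\<bar>a2 - a1\<bar> \<le> Lp * ds" using fL[OF s2 s1] by (simp add: a1_def a2_def ds_def)
  have U1b: "\<bar>U1\<bar> \<le> 2 * G" using U1p gb[OF s1] gb[OF l1] unfolding U1_def V1_def by linarith
  have Q1b: "\<bar>Q1\<bar> \<le> 2 * G" using Q_le[OF U1p(1,2)] U1b unfolding Q1_def by linarith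
  have dQ: "\<bar>Q2 - Q1\<bar> \<le> 2 * dy + 3 * (Lg * ds)"
    using Q_lip[OF U1p(1,3,2,4)] dU dV unfolding Q1_def Q2_def by (simp add: algebra_simps)
  have W2b: "\<bar>W2\<bar> \<le> 2 * P" using fb[OF s2] fb[OF l2] unfolding W2_def W_def by linarith
  have fl: "\<bar>f2 (lm s2) - f2 (lm s1)\<bar> \<le> Lp * (2 * ds)"
    using fL[OF l2 l1] mult_left_mono[OF dl nonneg(4)] by linarith
  have dW: "\<bar>W2 - W1\<bar> \<le> 3 * (Lp * ds)" using fl fL[OF s2 s1] unfolding W1_def W2_def W_def ds_def
    by (simp add: algebra_simps) linarith
  define A1 where "A1 = P * dy"
  define A2 where "A2 = Lg * P * ds"
  define A3 where "A3 = G * Lp * ds"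
  have p1: "\<bar>(U2 - U1) * a2\<bar> \<le> A1 + A2"
    using abs_prod_le[OF dU a2b] unfolding A1_def A2_def by (simp add: algebra_simps)
  have p2: "\<bar>U1 * (a2 - a1)\<bar> \<le> 2 * A3"
    using abs_prod_le[OF U1b da] unfolding A3_def by (simp add: algebra_simps)
  have p3: "\<bar>(Q2 - Q1) * W2\<bar> \<le> 4 * A1 + 6 * A2"
    using abs_prod_le[OF dQ W2b] unfolding A1_def A2_def by (simp add: algebra_simps)
  have p4: "\<bar>Q1 * (W2 - W1)\<bar> \<le> 6 * A3"
    using abs_prod_le[OF Q1b dW] unfolding A3_def by (simp add: algebra_simps)
  have z: "4 * (Lg * P + G * Lp) * ds \<le> ds / 10" by (rule z_le) (simp add: ds_def)
  then have z': "4 * A2 + 4 * A3 \<le> ds / 10" unfolding A2_def A3_def by (simp add: algebra_simps)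
  have A2p: "0 \<le> A2" using nonneg by (simp add: A2_def ds_def)
  have "\<bar>(Tf y2 s2 - Tf y1 s1) - (s2 - s1)\<bar> \<le> 12 * A1 + ds / 2"
    unfolding eq using p1 p2 p3 p4 z' A2p by argo
  then show ?thesis unfolding A1_def ds_def dy_def by (simp add: algebra_simps)
qed


lemma T_mono: assumes "valid y s1" "valid y s2" "s1 < s2" shows "Tf y s1 < Tf y s2"
proof -
  have "\<bar>(Tf y s2 - Tf y s1) - (s2 - s1)\<bar> \<le> \<bar>s2 - s1\<bar> / 2 + 12 * P * \<bar>y - y\<bar>"
    by (rule T_est[OF assms(1,2)])
  then have "\<bar>(Tf y s2 - Tf y s1) - (s2 - s1)\<bar> \<le> (s2 - s1) / 2" using assms(3) by simp
  then show ?thesis using assms(3) unfolding abs_le_iff by argo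
qed

lemma T_inj: assumes "valid y s1" "valid y s2" "Tf y s1 = Tf y s2" shows "s1 = s2"
proof (rule ccontr)
  assume "s1 \<noteq> s2"
  then have "s1 < s2 \<or> s2 < s1" by linarith
  then show False using T_mono[OF assms(1,2)] T_mono[OF assms(2,1)] assms(3) by auto
qed

lemma T_cont: assumes "\<forall>s\<in>{a..b}. valid y s" shows "continuous_on {a..b} (Tf y)"
proof (rule lipschitz_on_continuous_on)
  show "lipschitz_on (3/2) {a..b} (Tf y)"
    unfolding lipschitz_on_def dist_real_def
  proof (intro conjI ballI)
    fix x z assume "x \<in> {a..b}" "z \<in> {a..b}"
    then have "\<bar>(Tf y x - Tf y z) - (x - z)\<bar> \<le> \<bar>x - z\<bar> / 2 + 12 * P * \<bar>y - y\<bar>"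
      using T_est assms by blast
    then have "\<bar>(Tf y x - Tf y z) - (x - z)\<bar> \<le> \<bar>x - z\<bar> / 2" by simp
    then show "\<bar>Tf y x - Tf y z\<bar> \<le> 3 / 2 * \<bar>x - z\<bar>" by argo
  qed simp
qed

lemma T_top: assumes s: "s \<in> {0..tb}" and y: "g2 (lm s) = y" shows "Tf y s = lm s"
proof -
  define U where "U = y - g1 s"
  have S: "Sg s = U" unfolding Sg_def U_def using y by simp
  have UU: "U\<^sup>2 / U = U" by (cases "U = 0") (simp_all add: power2_eq_square)
  have "Tf y s = s - 4 * U * f1 s - 2 * U * W s" unfolding Tf_def S UU U_def[symmetric] by simp
  also have "\<dots> = s - 2 * U * (f1 s + f2 (lm s))" unfolding W_def by (simp add: algebra_simps)
  also have "\<dots> = lm s" using lm_id[OF s] y unfolding U_def by simp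
  finally show ?thesis .
qed

lemma T_bot: assumes y: "g1 s = y" shows "Tf y s = s"
  unfolding Tf_def using y by simp

lemma line:
  assumes l0: "l0 \<in> {0<..<tb}" and c: "(0 \<le> y \<and> y < g2 l0) \<or> (y < 0 \<and> g1 l0 < y)"
  shows "\<exists>\<alpha> \<beta> \<sigma>1 \<sigma>2. 0 \<le> \<sigma>1 \<and> \<sigma>1 < \<sigma>2 \<and> \<sigma>2 \<le> tb \<and> \<alpha> < l0 \<and> l0 < \<beta> \<and>
     (\<forall>s\<in>{\<sigma>1..\<sigma>2}. valid y s) \<and> (\<forall>s\<in>{\<sigma>1<..<\<sigma>2}. g1 s < y \<and> y < g2 (lm s)) \<and>
     Tf y \<sigma>1 = \<alpha> \<and> Tf y \<sigma>2 = \<beta> \<and> (\<forall>t\<in>{\<alpha><..<\<beta>}. (y, t) \<in> domD tb g1 g2) \<and>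
     (\<forall>s\<in>{0..tb}. (if 0 \<le> y then lm s else s) \<in> {\<alpha><..<\<beta>} \<longrightarrow> s \<in> {\<sigma>1<..<\<sigma>2})"
proof (cases "0 \<le> y")
  case True
  with c have y2: "y < g2 l0" by auto
  have "\<exists>x\<ge>0. x \<le> l0 \<and> g2 x = y"
  proof (rule IVT'[of g2 0 y l0])
    show "continuous_on {0..l0} g2" by (rule continuous_on_subset[OF g2c]) (use l0 in auto)
  qed (use True y2 ends(3) l0 in auto)
  then obtain \<alpha> where \<alpha>: "0 \<le> \<alpha>" "\<alpha> \<le> l0" "g2 \<alpha> = y" by auto
  have "\<exists>x\<ge>l0. x \<le> tb \<and> g2 x = y"
  proof (rule IVT2'[of g2 tb y l0])
    show "continuous_on {l0..tb} g2" by (rule continuous_on_subset[OF g2c]) (use l0 in auto)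
  qed (use True y2 ends(4) l0 in auto)
  then obtain \<beta> where \<beta>: "l0 \<le> \<beta>" "\<beta> \<le> tb" "g2 \<beta> = y" by auto
  have al: "\<alpha> < l0" using \<alpha> y2 by (cases "\<alpha> = l0") auto
  have lb: "l0 < \<beta>" using \<beta> y2 by (cases "\<beta> = l0") auto
  have l0i: "l0 \<in> {0..tb}" using l0 by auto
  have ai: "\<alpha> \<in> {0..tb}" and bi: "\<beta> \<in> {0..tb}" using \<alpha> \<beta> l0 by auto
  have gin: "y < g2 r" if r: "r \<in> {\<alpha><..<\<beta>}" for r
  proof -
    consider "r < l0" | "r = l0" | "l0 < r" by linarith
    then show ?thesis
    proof cases
      case 1
      have "- g2 r < - y" by (rule convex_strict[OF cvx2 ai l0i]) (use \<alpha> y2 r 1 in auto)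
      then show ?thesis by simp
    next
      case 2 then show ?thesis using y2 by simp
    next
      case 3
      have "- g2 r < - y" by (rule convex_strict[OF cvx2 bi l0i]) (use \<beta> y2 r 3 in auto)
      then show ?thesis by simp
    qed
  qed
  have gcl: "y \<le> g2 r" if r: "r \<in> {\<alpha>..\<beta>}" for r
    using gin[of r] r \<alpha> \<beta> by (cases "r = \<alpha> \<or> r = \<beta>") auto
  obtain \<sigma>1 where s1: "\<sigma>1 \<in> {0..tb}" "lm \<sigma>1 = \<alpha>" using lm_surj[OF ai] by blast
  obtain \<sigma>2 where s2: "\<sigma>2 \<in> {0..tb}" "lm \<sigma>2 = \<beta>" using lm_surj[OF bi] by blast
  have s12: "\<sigma>1 < \<sigma>2"
  proof (rule ccontr)
    assume "\<not> \<sigma>1 < \<sigma>2"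
    then have "lm \<sigma>2 \<le> lm \<sigma>1" using lm_mono[OF s2(1) s1(1)] by simp
    then show False using s1 s2 al lb by simp
  qed
  have h1: "0 \<le> \<sigma>1" "\<sigma>2 \<le> tb" using s1 s2 by auto
  have h2: "\<forall>s\<in>{\<sigma>1..\<sigma>2}. valid y s"
  proof
    fix s assume s: "s \<in> {\<sigma>1..\<sigma>2}"
    then have si: "s \<in> {0..tb}" using s1 s2 by auto
    have "lm s \<in> {\<alpha>..\<beta>}" using lm_mono[OF s1(1) si] lm_mono[OF si s2(1)] s s1 s2 by auto
    then show "valid y s" unfolding valid_def using si gcl g1_nonpos[OF si] True by auto
  qed
  have h3: "\<forall>s\<in>{\<sigma>1<..<\<sigma>2}. g1 s < y \<and> y < g2 (lm s)"
  proof
    fix s assume s: "s \<in> {\<sigma>1<..<\<sigma>2}"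
    then have si: "s \<in> {0<..<tb}" using s1 s2 by auto
    then have si': "s \<in> {0..tb}" by auto
    have "lm s \<in> {\<alpha><..<\<beta>}" using lm_est(2)[OF s1(1) si'] lm_est(2)[OF si' s2(1)] s s1 s2 by auto
    then show "g1 s < y \<and> y < g2 (lm s)" using gin sign[OF si] True by auto
  qed
  have h4: "Tf y \<sigma>1 = \<alpha>" using T_top[OF s1(1)] s1 \<alpha> by simp
  have h5: "Tf y \<sigma>2 = \<beta>" using T_top[OF s2(1)] s2 \<beta> by simp
  have h6: "\<forall>t\<in>{\<alpha><..<\<beta>}. (y, t) \<in> domD tb g1 g2"
  proof
    fix t assume t: "t \<in> {\<alpha><..<\<beta>}"
    then have ti: "t \<in> {0<..<tb}" using \<alpha> \<beta> by auto
    show "(y, t) \<in> domD tb g1 g2" unfolding domD_def using ti sign[OF ti] gin[OF t] True by auto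
  qed
  have h7: "\<forall>s\<in>{0..tb}. (if 0 \<le> y then lm s else s) \<in> {\<alpha><..<\<beta>} \<longrightarrow> s \<in> {\<sigma>1<..<\<sigma>2}"
  proof (intro ballI impI)
    fix s assume si: "s \<in> {0..tb}" and "(if 0 \<le> y then lm s else s) \<in> {\<alpha><..<\<beta>}"
    then have ls: "lm s \<in> {\<alpha><..<\<beta>}" using True by simp
    have "\<sigma>1 < s" using lm_mono[OF si s1(1)] ls s1 by (cases "\<sigma>1 < s") auto
    moreover have "s < \<sigma>2" using lm_mono[OF s2(1) si] ls s2 by (cases "s < \<sigma>2") auto
    ultimately show "s \<in> {\<sigma>1<..<\<sigma>2}" by simp
  qed
  show ?thesis using h1 s12 al lb h2 h3 h4 h5 h6 h7 by blast
next
  case False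
  with c have y1: "g1 l0 < y" and yn: "y < 0" by auto
  have "\<exists>x\<ge>0. x \<le> l0 \<and> g1 x = y"
  proof (rule IVT2'[of g1 l0 y 0])
    show "continuous_on {0..l0} g1" by (rule continuous_on_subset[OF g1c]) (use l0 in auto)
  qed (use yn y1 ends(1) l0 in auto)
  then obtain \<alpha> where \<alpha>: "0 \<le> \<alpha>" "\<alpha> \<le> l0" "g1 \<alpha> = y" by auto
  have "\<exists>x\<ge>l0. x \<le> tb \<and> g1 x = y"
  proof (rule IVT'[of g1 l0 y tb])
    show "continuous_on {l0..tb} g1" by (rule continuous_on_subset[OF g1c]) (use l0 in auto)
  qed (use yn y1 ends(2) l0 in auto)
  then obtain \<beta> where \<beta>: "l0 \<le> \<beta>" "\<beta> \<le> tb" "g1 \<beta> = y" by auto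
  have al: "\<alpha> < l0" using \<alpha> y1 by (cases "\<alpha> = l0") auto
  have lb: "l0 < \<beta>" using \<beta> y1 by (cases "\<beta> = l0") auto
  have l0i: "l0 \<in> {0..tb}" using l0 by auto
  have ai: "\<alpha> \<in> {0..tb}" and bi: "\<beta> \<in> {0..tb}" using \<alpha> \<beta> l0 by auto
  have gin: "g1 r < y" if r: "r \<in> {\<alpha><..<\<beta>}" for r
  proof -
    consider "r < l0" | "r = l0" | "l0 < r" by linarith
    then show ?thesis
    proof cases
      case 1
      show ?thesis by (rule convex_strict[OF cvx ai l0i]) (use \<alpha> y1 r 1 in auto)
    next
      case 2 then show ?thesis using y1 by simp
    next
      case 3
      show ?thesis by (rule convex_strict[OF cvx bi l0i]) (use \<beta> y1 r 3 in auto)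
    qed
  qed
  have gcl: "g1 r \<le> y" if r: "r \<in> {\<alpha>..\<beta>}" for r
    using gin[of r] r \<alpha> \<beta> by (cases "r = \<alpha> \<or> r = \<beta>") auto
  have h1: "0 \<le> \<alpha>" "\<beta> \<le> tb" "\<alpha> < \<beta>" using \<alpha> \<beta> al lb by auto
  have h2: "\<forall>s\<in>{\<alpha>..\<beta>}. valid y s"
  proof
    fix s assume s: "s \<in> {\<alpha>..\<beta>}"
    then have si: "s \<in> {0..tb}" using \<alpha> \<beta> by auto
    have "0 \<le> g2 (lm s)" using g2_nonneg lm(1)[OF si] by blast
    then show "valid y s" unfolding valid_def using si gcl[OF s] yn by auto
  qed
  have h3: "\<forall>s\<in>{\<alpha><..<\<beta>}. g1 s < y \<and> y < g2 (lm s)"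
  proof
    fix s assume s: "s \<in> {\<alpha><..<\<beta>}"
    then have si: "s \<in> {0..tb}" using \<alpha> \<beta> by auto
    have "0 \<le> g2 (lm s)" using g2_nonneg lm(1)[OF si] by blast
    then show "g1 s < y \<and> y < g2 (lm s)" using gin[OF s] yn by auto
  qed
  have h4: "Tf y \<alpha> = \<alpha>" by (rule T_bot) (use \<alpha> in simp)
  have h5: "Tf y \<beta> = \<beta>" by (rule T_bot) (use \<beta> in simp)
  have h6: "\<forall>t\<in>{\<alpha><..<\<beta>}. (y, t) \<in> domD tb g1 g2"
  proof
    fix t assume t: "t \<in> {\<alpha><..<\<beta>}"
    then have ti: "t \<in> {0<..<tb}" using \<alpha> \<beta> by auto
    show "(y, t) \<in> domD tb g1 g2" unfolding domD_def using ti sign[OF ti] gin[OF t] yn by auto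
  qed
  have h7: "\<forall>s\<in>{0..tb}. (if 0 \<le> y then lm s else s) \<in> {\<alpha><..<\<beta>} \<longrightarrow> s \<in> {\<alpha><..<\<beta>}"
    using False by simp
  show ?thesis using h1 al lb h2 h3 h4 h5 h6 h7 by blast
qed

lemma M1:
  assumes s0: "s0 \<in> {0<..<tb}" and y: "g1 s0 < y" "y < g2 (lm s0)"
  shows "(y, Tf y s0) \<in> domD tb g1 g2"
proof -
  define l0 where "l0 = (if 0 \<le> y then lm s0 else s0)"
  have s0i: "s0 \<in> {0..tb}" using s0 by auto
  have l0: "l0 \<in> {0<..<tb}" using lm_open[OF s0] s0 by (simp add: l0_def)
  have c: "(0 \<le> y \<and> y < g2 l0) \<or> (y < 0 \<and> g1 l0 < y)" using y by (auto simp: l0_def)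
  obtain \<alpha> \<beta> \<sigma>1 \<sigma>2 where L: "0 \<le> \<sigma>1" "\<sigma>1 < \<sigma>2" "\<sigma>2 \<le> tb" "\<alpha> < l0" "l0 < \<beta>"
     "\<forall>s\<in>{\<sigma>1..\<sigma>2}. valid y s" "Tf y \<sigma>1 = \<alpha>" "Tf y \<sigma>2 = \<beta>"
     "\<forall>t\<in>{\<alpha><..<\<beta>}. (y, t) \<in> domD tb g1 g2"
     "\<forall>s\<in>{0..tb}. (if 0 \<le> y then lm s else s) \<in> {\<alpha><..<\<beta>} \<longrightarrow> s \<in> {\<sigma>1<..<\<sigma>2}"
    using line[OF l0 c] by blast
  have "s0 \<in> {\<sigma>1<..<\<sigma>2}" using L(4,5,10) s0i unfolding l0_def by auto
  then have "Tf y \<sigma>1 < Tf y s0" "Tf y s0 < Tf y \<sigma>2"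
    using T_mono L(6) by auto
  then show ?thesis using L(7,8,9) by auto
qed

lemma M2:
  assumes D: "(y, t) \<in> domD tb g1 g2"
  shows "\<exists>s\<in>{0<..<tb}. g1 s < y \<and> y < g2 (lm s) \<and> Tf y s = t"
proof -
  have t: "t \<in> {0<..<tb}" and c0: "g1 t < y" "y < g2 t" using D by (auto simp: domD_def)
  have c: "(0 \<le> y \<and> y < g2 t) \<or> (y < 0 \<and> g1 t < y)" using c0 by auto
  obtain \<alpha> \<beta> \<sigma>1 \<sigma>2 where L: "0 \<le> \<sigma>1" "\<sigma>1 < \<sigma>2" "\<sigma>2 \<le> tb" "\<alpha> < t" "t < \<beta>"
     "\<forall>s\<in>{\<sigma>1..\<sigma>2}. valid y s" "\<forall>s\<in>{\<sigma>1<..<\<sigma>2}. g1 s < y \<and> y < g2 (lm s)"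
     "Tf y \<sigma>1 = \<alpha>" "Tf y \<sigma>2 = \<beta>"
    using line[OF t c] by blast
  have "\<exists>x\<ge>\<sigma>1. x \<le> \<sigma>2 \<and> Tf y x = t"
    by (rule IVT'[of "Tf y" \<sigma>1 t \<sigma>2]) (use L T_cont[OF L(6)] in auto)
  then obtain s where s: "\<sigma>1 \<le> s" "s \<le> \<sigma>2" "Tf y s = t" by auto
  have "s \<noteq> \<sigma>1" "s \<noteq> \<sigma>2" using s L by auto
  then have ss: "s \<in> {\<sigma>1<..<\<sigma>2}" using s by auto
  then have "s \<in> {0<..<tb}" using L by auto
  then show ?thesis using L(7) ss s by blast
qed


lemma valid_of: "s \<in> {0<..<tb} \<Longrightarrow> g1 s < y \<Longrightarrow> y < g2 (lm s) \<Longrightarrow> valid y s"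
  unfolding valid_def by auto

definition sg where "sg y t = (THE s. s \<in> {0<..<tb} \<and> g1 s < y \<and> y < g2 (lm s) \<and> Tf y s = t)"

lemma sg_ex1: assumes "(y, t) \<in> domD tb g1 g2"
  shows "\<exists>!s. s \<in> {0<..<tb} \<and> g1 s < y \<and> y < g2 (lm s) \<and> Tf y s = t"
proof -
  obtain s where s: "s \<in> {0<..<tb}" "g1 s < y" "y < g2 (lm s)" "Tf y s = t" using M2[OF assms] by blast
  have "s' = s" if "s' \<in> {0<..<tb}" "g1 s' < y" "y < g2 (lm s')" "Tf y s' = t" for s'
    using T_inj[OF valid_of[OF that(1-3)] valid_of[OF s(1-3)]] that s by simp
  then show ?thesis using s by blast
qed

lemma sg: assumes "(y, t) \<in> domD tb g1 g2"
  shows "sg y t \<in> {0<..<tb}" "g1 (sg y t) < y" "y < g2 (lm (sg y t))" "Tf y (sg y t) = t"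
  using theI'[OF sg_ex1[OF assms]] unfolding sg_def by auto

lemma sg_eq: assumes "s \<in> {0<..<tb}" "g1 s < y" "y < g2 (lm s)" shows "sg y (Tf y s) = s"
proof -
  have D: "(y, Tf y s) \<in> domD tb g1 g2" by (rule M1[OF assms])
  show ?thesis using sg_ex1[OF D] sg[OF D] assms by blast
qed

definition uD where "uD p = Xf (fst p) (sg (fst p) (snd p))"

lemma Sg_pos: assumes "s \<in> {0<..<tb}" shows "0 < Sg s"
  using sign[OF assms] sign[OF lm_open[OF assms]] unfolding Sg_def by auto

lemma Sg_le: assumes "s \<in> {0..tb}" shows "Sg s \<le> 2 * G"
  using gb[OF assms] gb[OF lm(1)[OF assms]] unfolding Sg_def by linarith

lemma W_le: assumes "s \<in> {0..tb}" shows "\<bar>W s\<bar> \<le> 2 * P"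
  using fb[OF assms] fb[OF lm(1)[OF assms]] unfolding W_def by linarith

lemma W_bound: "\<exists>K\<ge>0. \<forall>s\<in>{0..tb}. \<bar>W s\<bar> \<le> K * Sg s"
proof -
  define c0 where "c0 = g1 (tb / 2)"
  have c0: "c0 < 0" using sign[of "tb/2"] tb by (simp add: c0_def)
  define m where "m = - 2 * c0 / tb"
  have m: "0 < m" using c0 tb by (simp add: m_def divide_neg_pos)
  define K where "K = 3 * Lp / m"
  have K: "0 \<le> K" using m nonneg by (simp add: K_def)
  have "\<bar>W s\<bar> \<le> K * Sg s" if s: "s \<in> {0..tb}" for s
  proof -
    define mn where "mn = min s (tb - s)"
    have mn0: "0 \<le> mn" using s by (simp add: mn_def)
    have hm: "tb / 2 \<in> {0..tb}" using tb by simp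
    have low: "m * mn \<le> - g1 s"
    proof (cases "s \<le> tb / 2")
      case True
      define th where "th = 2 * s / tb"
      have th: "0 \<le> th" "th \<le> 1" using s True tb by (auto simp: th_def field_simps)
      have "g1 ((1 - th) * 0 + th * (tb / 2)) \<le> (1 - th) * g1 0 + th * g1 (tb / 2)"
        by (rule convex_real[OF cvx _ hm th]) (use tb in simp)
      moreover have "(1 - th) * 0 + th * (tb / 2) = s" using tb by (simp add: th_def)
      ultimately have "g1 s \<le> th * c0" using ends by (simp add: c0_def)
      moreover have "th * c0 = - (m * s)" using tb by (simp add: th_def m_def field_simps)
      moreover have "m * mn \<le> m * s" using m by (intro mult_left_mono) (auto simp: mn_def)
      ultimately show ?thesis by linarith
    next
      case False
      define th where "th = (2 * s - tb) / tb"
      have th: "0 \<le> th" "th \<le> 1" using s False tb by (auto simp: th_def field_simps)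
      have tbi: "tb \<in> {0..tb}" using tb by simp
      have "g1 ((1 - th) * (tb / 2) + th * tb) \<le> (1 - th) * g1 (tb / 2) + th * g1 tb"
        by (rule convex_real[OF cvx hm tbi th])
      moreover have "(1 - th) * (tb / 2) + th * tb = s" using tb by (simp add: th_def field_simps)
      ultimately have "g1 s \<le> (1 - th) * c0" using ends by (simp add: c0_def)
      moreover have "(1 - th) * c0 = - (m * (tb - s))" using tb by (simp add: th_def m_def field_simps)
      moreover have "m * mn \<le> m * (tb - s)" using m by (intro mult_left_mono) (auto simp: mn_def)
      ultimately show ?thesis by linarith
    qed
    have l: "lm s \<in> {0..tb}" using lm(1)[OF s] .
    have z: "0 \<in> {0..tb}" and t: "tb \<in> {0..tb}" using tb by auto
    have up1: "\<bar>W s\<bar> \<le> 3 * Lp * s"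
    proof -
      have "\<bar>f2 (lm s) - f2 (lm 0)\<bar> \<le> Lp * \<bar>lm s - lm 0\<bar>" using fL[OF l lm(1)[OF z]] by simp
      also have "\<dots> \<le> Lp * (2 * \<bar>s - 0\<bar>)" using lm_est(1)[OF z s] nonneg by (intro mult_left_mono) auto
      finally have a: "\<bar>f2 (lm s) - f2 0\<bar> \<le> 2 * Lp * s" using s lm_0 by simp
      have b: "\<bar>f1 s - f1 0\<bar> \<le> Lp * s" using fL[OF s z] s by simp
      show ?thesis using a b ends(5) unfolding W_def by linarith
    qed
    have up2: "\<bar>W s\<bar> \<le> 3 * Lp * (tb - s)"
    proof -
      have "\<bar>f2 (lm s) - f2 (lm tb)\<bar> \<le> Lp * \<bar>lm s - lm tb\<bar>" using fL[OF l lm(1)[OF t]] by simp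
      also have "\<dots> \<le> Lp * (2 * \<bar>tb - s\<bar>)" using lm_est(1)[OF s t] nonneg by (intro mult_left_mono) (auto simp: abs_minus_commute)
      finally have a: "\<bar>f2 (lm s) - f2 tb\<bar> \<le> 2 * Lp * (tb - s)" using s lm_tb by (simp add: algebra_simps)
      have b: "\<bar>f1 s - f1 tb\<bar> \<le> Lp * (tb - s)" using fL[OF s t] s by simp
      show ?thesis using a b ends(6) unfolding W_def by linarith
    qed
    have up: "\<bar>W s\<bar> \<le> 3 * Lp * mn" using up1 up2 by (simp add: mn_def min_def)
    have "3 * Lp * mn = K * (m * mn)" using m by (simp add: K_def)
    also have "\<dots> \<le> K * (- g1 s)" using low K by (rule mult_left_mono)
    also have "\<dots> \<le> K * Sg s" using K g2_nonneg[OF l] by (intro mult_left_mono) (auto simp: Sg_def)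
    finally show ?thesis using up by linarith
  qed
  then show ?thesis using K by blast
qed

lemma X_est:
  assumes K: "0 \<le> K" "\<forall>s\<in>{0..tb}. \<bar>W s\<bar> \<le> K * Sg s"
    and v1: "valid y1 s1" and v2: "valid y2 s2" and o1: "s1 \<in> {0<..<tb}" and o2: "s2 \<in> {0<..<tb}"
  shows "\<bar>Xf y2 s2 - Xf y1 s1\<bar> \<le> (4 * Lp + 4 * K * Lg) * \<bar>s2 - s1\<bar> + K * \<bar>y2 - y1\<bar>"
proof -
  have s1: "s1 \<in> {0..tb}" and s2: "s2 \<in> {0..tb}" using v1 v2 by (auto simp: valid_def)
  have l1: "lm s1 \<in> {0..tb}" and l2: "lm s2 \<in> {0..tb}" using lm(1) s1 s2 by auto
  define U1 where "U1 = y1 - g1 s1"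
  define U2 where "U2 = y2 - g1 s2"
  define S1 where "S1 = Sg s1"
  define S2 where "S2 = Sg s2"
  define h2 where "h2 = U2 / S2"
  define a1 where "a1 = f1 s1"
  define a2 where "a2 = f1 s2"
  define W1 where "W1 = W s1"
  define W2 where "W2 = W s2"
  define ds where "ds = \<bar>s2 - s1\<bar>"
  define dy where "dy = \<bar>y2 - y1\<bar>"
  have S1p: "0 < S1" using Sg_pos[OF o1] by (simp add: S1_def)
  have S2p: "0 < S2" using Sg_pos[OF o2] by (simp add: S2_def)
  have U2S2: "0 \<le> U2" "U2 \<le> S2" using v2 unfolding U2_def S2_def valid_def Sg_def by auto
  have h2: "0 \<le> h2" "h2 \<le> 1" unfolding h2_def using U2S2 S2p
    by (simp_all add: divide_nonneg_pos divide_le_eq_1_pos)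
  have X1: "Xf y1 s1 = a1 + W1 * (U1 / S1)" unfolding Xf_def a1_def W1_def U1_def S1_def by simp
  have X2: "Xf y2 s2 = a2 + W2 * h2" unfolding Xf_def a2_def W2_def U2_def S2_def h2_def by simp
  have hS2: "h2 * S2 = U2" using S2p by (simp add: h2_def)
  have e1: "(U2 - U1) - h2 * (S2 - S1) = h2 * S1 - U1" using hS2 by (simp add: algebra_simps)
  have e2: "(W1 / S1) * (h2 * S1 - U1) = W1 * h2 - W1 * (U1 / S1)" using S1p by (simp add: field_simps)
  have eq: "Xf y2 s2 - Xf y1 s1 = (a2 - a1) + (W2 - W1) * h2 + (W1 / S1) * ((U2 - U1) - h2 * (S2 - S1))"
    unfolding X1 X2 e1 e2 by (simp add: algebra_simps)
  have gs: "\<bar>g1 s2 - g1 s1\<bar> \<le> Lg * ds" using gL[OF s2 s1] by (simp add: ds_def)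
  have dl: "\<bar>lm s2 - lm s1\<bar> \<le> 2 * ds" using lm_est(1)[OF s1 s2] by (simp add: ds_def)
  have gl: "\<bar>g2 (lm s2) - g2 (lm s1)\<bar> \<le> Lg * (2 * ds)"
    using gL[OF l2 l1] mult_left_mono[OF dl nonneg(2)] by linarith
  have dU: "\<bar>U2 - U1\<bar> \<le> dy + Lg * ds" using gs unfolding U1_def U2_def dy_def by linarith
  have dS: "\<bar>S2 - S1\<bar> \<le> 3 * (Lg * ds)" using gs gl unfolding S1_def S2_def Sg_def by linarith
  have "\<bar>h2 * (S2 - S1)\<bar> = \<bar>S2 - S1\<bar> * h2" by (simp add: abs_mult abs_of_nonneg[OF h2(1)])
  also have "\<dots> \<le> \<bar>S2 - S1\<bar>" by (rule mult_right_le_one_le) (use h2 in auto)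
  finally have hS: "\<bar>h2 * (S2 - S1)\<bar> \<le> \<bar>S2 - S1\<bar>" .
  have E: "\<bar>(U2 - U1) - h2 * (S2 - S1)\<bar> \<le> dy + 4 * (Lg * ds)" using dU dS hS by linarith
  have "\<bar>W1\<bar> \<le> K * S1" using K(2) s1 by (simp add: W1_def S1_def)
  then have wa: "\<bar>W1\<bar> / S1 \<le> K" by (simp only: pos_divide_le_eq[OF S1p])
  have wb: "\<bar>W1 / S1\<bar> = \<bar>W1\<bar> / S1" by (simp add: abs_divide abs_of_pos[OF S1p])
  have WK: "\<bar>W1 / S1\<bar> \<le> K" using ord_eq_le_trans[OF wb wa] .
  have da: "\<bar>a2 - a1\<bar> \<le> Lp * ds" using fL[OF s2 s1] by (simp add: a1_def a2_def ds_def)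
  have fl: "\<bar>f2 (lm s2) - f2 (lm s1)\<bar> \<le> Lp * (2 * ds)"
    using fL[OF l2 l1] mult_left_mono[OF dl nonneg(4)] by linarith
  have dW: "\<bar>W2 - W1\<bar> \<le> 3 * (Lp * ds)" using fl fL[OF s2 s1] unfolding W1_def W2_def W_def ds_def
    by (simp add: algebra_simps) linarith
  have "\<bar>(W2 - W1) * h2\<bar> = \<bar>W2 - W1\<bar> * h2" by (simp add: abs_mult abs_of_nonneg[OF h2(1)])
  also have "\<dots> \<le> \<bar>W2 - W1\<bar>" by (rule mult_right_le_one_le) (use h2 in auto)
  finally have p1: "\<bar>(W2 - W1) * h2\<bar> \<le> 3 * (Lp * ds)" using dW by linarith
  have p2: "\<bar>(W1 / S1) * ((U2 - U1) - h2 * (S2 - S1))\<bar> \<le> K * (dy + 4 * (Lg * ds))"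
    by (rule abs_prod_le[OF WK E])
  have "\<bar>Xf y2 s2 - Xf y1 s1\<bar> \<le> Lp * ds + 3 * (Lp * ds) + K * (dy + 4 * (Lg * ds))"
    unfolding eq using da p1 p2 by argo
  then show ?thesis unfolding ds_def dy_def by (simp add: algebra_simps)
qed

lemma uD_lip: "\<exists>L\<ge>0. \<forall>p\<in>domD tb g1 g2. \<forall>q\<in>domD tb g1 g2. dist (uD p) (uD q) \<le> L * dist p q"
proof -
  obtain K where K: "0 \<le> K" "\<forall>s\<in>{0..tb}. \<bar>W s\<bar> \<le> K * Sg s" using W_bound by blast
  define C where "C = 4 * Lp + 4 * K * Lg"
  have C: "0 \<le> C" using K nonneg by (simp add: C_def)
  define L where "L = C * (2 + 24 * P) + K"
  have L: "0 \<le> L" using C K nonneg by (simp add: L_def)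
  have "dist (uD p) (uD q) \<le> L * dist p q" if p: "p \<in> domD tb g1 g2" and q: "q \<in> domD tb g1 g2" for p q
  proof -
    obtain y1 t1 where pp: "p = (y1, t1)" by (cases p)
    obtain y2 t2 where qq: "q = (y2, t2)" by (cases q)
    define s1 where "s1 = sg y1 t1"
    define s2 where "s2 = sg y2 t2"
    have S1: "s1 \<in> {0<..<tb}" "g1 s1 < y1" "y1 < g2 (lm s1)" "Tf y1 s1 = t1" using sg[of y1 t1] p pp s1_def by auto
    have S2: "s2 \<in> {0<..<tb}" "g1 s2 < y2" "y2 < g2 (lm s2)" "Tf y2 s2 = t2" using sg[of y2 t2] q qq s2_def by auto
    have v1: "valid y1 s1" and v2: "valid y2 s2" using valid_of S1 S2 by auto
    define dd where "dd = dist p q"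
    define ds where "ds = \<bar>s2 - s1\<bar>"
    define dy where "dy = \<bar>y2 - y1\<bar>"
    define dt where "dt = \<bar>t2 - t1\<bar>"
    have dy: "dy \<le> dd" using dist_fst_le[of p q] unfolding dd_def dy_def pp qq by (simp add: dist_real_def abs_minus_commute)
    have dt: "dt \<le> dd" using dist_snd_le[of p q] unfolding dd_def dt_def pp qq by (simp add: dist_real_def abs_minus_commute)
    have "\<bar>(t2 - t1) - (s2 - s1)\<bar> \<le> ds / 2 + 12 * P * dy"
      using T_est[OF v1 v2] S1(4) S2(4) by (simp add: ds_def dy_def)
    then have ds1: "ds \<le> 2 * dt + 24 * (P * dy)" unfolding dt_def ds_def by argo
    have "P * dy \<le> P * dd" using dy nonneg by (intro mult_left_mono) auto
    then have ds2: "ds \<le> (2 + 24 * P) * dd" using ds1 dt by (simp add: algebra_simps)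
    have X: "\<bar>Xf y2 s2 - Xf y1 s1\<bar> \<le> C * ds + K * dy"
      using X_est[OF K v1 v2 S1(1) S2(1)] by (simp add: C_def ds_def dy_def)
    have "C * ds \<le> C * ((2 + 24 * P) * dd)" using ds2 C by (rule mult_left_mono)
    moreover have "K * dy \<le> K * dd" using dy K by (intro mult_left_mono) auto
    ultimately have "\<bar>Xf y2 s2 - Xf y1 s1\<bar> \<le> L * dd" using X unfolding L_def by (simp add: algebra_simps)
    moreover have "uD p = Xf y1 s1" "uD q = Xf y2 s2" by (simp_all add: uD_def pp qq s1_def s2_def)
    ultimately show ?thesis by (simp add: dist_real_def dd_def abs_minus_commute)
  qed
  then show ?thesis using L by blast
qed


lemma near_open: assumes "s0 \<in> {0..tb}" "0 < d" shows "\<exists>s\<in>{0<..<tb}. \<bar>s - s0\<bar> \<le> d"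
proof -
  define d' where "d' = min d (tb / 4)"
  have d': "0 < d'" "d' \<le> d" "d' \<le> tb / 4" using assms tb by (auto simp: d'_def)
  show ?thesis
  proof (cases "s0 \<le> tb / 2")
    case True
    then show ?thesis using d' assms by (intro bexI[of _ "s0 + d'"]) auto
  next
    case False
    then show ?thesis using d' assms by (intro bexI[of _ "s0 - d'"]) auto
  qed
qed

lemma small_eps: assumes "0 \<le> (C::real)" "0 < (e::real)" shows "C * (e / (C + 1)) < e" "0 < e / (C + 1)"
proof -
  have "(C + 1) * e = C * e + e" by (simp add: algebra_simps)
  then have "C * e < (C + 1) * e" using assms by linarith
  then show "C * (e / (C + 1)) < e" using assms by (simp add: field_simps)
  show "0 < e / (C + 1)" using assms by simp
qed

lemma ray:
  assumes s: "s \<in> {0<..<tb}" and h: "0 < h" "h < 1" and y: "y = g1 s + h * Sg s"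
  shows "g1 s < y" "y < g2 (lm s)" "(y, Tf y s) \<in> domD tb g1 g2"
    "uD (y, Tf y s) = f1 s + W s * h"
    "Tf y s = s - 4 * h * (Sg s * f1 s) - 2 * h\<^sup>2 * (Sg s * W s)"
proof -
  have S: "0 < Sg s" by (rule Sg_pos[OF s])
  show a: "g1 s < y" using S h y by simp
  have "y = g2 (lm s) - (1 - h) * Sg s" using y by (simp add: Sg_def algebra_simps)
  then show b: "y < g2 (lm s)" using S h by simp
  show "(y, Tf y s) \<in> domD tb g1 g2" by (rule M1[OF s a b])
  have U: "y - g1 s = h * Sg s" using y by simp
  have "uD (y, Tf y s) = Xf y s" using sg_eq[OF s a b] by (simp add: uD_def)
  also have "\<dots> = f1 s + W s * h" unfolding Xf_def U using S by simp
  finally show "uD (y, Tf y s) = f1 s + W s * h" .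
  have "(h * Sg s)\<^sup>2 / Sg s = h\<^sup>2 * Sg s" using S by (simp add: power2_eq_square)
  then show "Tf y s = s - 4 * h * (Sg s * f1 s) - 2 * h\<^sup>2 * (Sg s * W s)"
    unfolding Tf_def U by (simp add: algebra_simps)
qed

lemma AP1:
  assumes s0: "s0 \<in> {0..tb}" and e: "0 < e"
  shows "\<exists>p\<in>domD tb g1 g2. dist p (g1 s0, s0) < e \<and> \<bar>uD p - f1 s0\<bar> < e"
proof -
  define Cst where "Cst = Lg + 2 * G + 16 * (G * P) + 1 + Lp + 2 * P"
  have Cst: "0 \<le> Cst" using nonneg by (simp add: Cst_def)
  define d where "d = e / (Cst + 1)"
  have d: "0 < d" "Cst * d < e" using small_eps[OF Cst e] by (simp_all add: d_def)
  obtain s where s: "s \<in> {0<..<tb}" "\<bar>s - s0\<bar> \<le> d" using near_open[OF s0 d(1)] by blast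
  have si: "s \<in> {0..tb}" using s by auto
  define h where "h = min d (1/2)"
  have h: "0 < h" "h < 1" "h \<le> d" using d by (auto simp: h_def)
  define y where "y = g1 s + h * Sg s"
  note R = ray[OF s(1) h(1,2) y_def]
  define S where "S = Sg s"
  have S: "0 < S" "S \<le> 2 * G" using Sg_pos[OF s(1)] Sg_le[OF si] by (simp_all add: S_def)
  have a: "\<bar>f1 s\<bar> \<le> P" using fb[OF si] by simp
  have Wb: "\<bar>W s\<bar> \<le> 2 * P" by (rule W_le[OF si])
  have Sa: "\<bar>S * f1 s\<bar> \<le> 2 * G * P" using abs_prod_le[of S "2 * G" "f1 s" P] S a by simp
  have SW: "\<bar>S * W s\<bar> \<le> 2 * G * (2 * P)" using abs_prod_le[of S "2 * G" "W s" "2 * P"] S Wb by simp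
  have GP: "0 \<le> G * P" using nonneg by simp
  have hh: "h\<^sup>2 \<le> h" using h by (simp add: power2_eq_square mult_left_le_one_le)
  have t1: "\<bar>4 * h * (S * f1 s)\<bar> \<le> 8 * (G * P) * d"
  proof -
    have "\<bar>4 * h * (S * f1 s)\<bar> = 4 * h * \<bar>S * f1 s\<bar>" using h by (simp add: abs_mult)
    also have "\<dots> \<le> 4 * h * (2 * G * P)" using Sa h by (intro mult_left_mono) auto
    also have "\<dots> \<le> 4 * d * (2 * G * P)" using h GP by (intro mult_right_mono) auto
    finally show ?thesis by (simp add: algebra_simps)
  qed
  have t2: "\<bar>2 * h\<^sup>2 * (S * W s)\<bar> \<le> 8 * (G * P) * d"
  proof -
    have "\<bar>2 * h\<^sup>2 * (S * W s)\<bar> = 2 * h\<^sup>2 * \<bar>S * W s\<bar>" by (simp add: abs_mult)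
    also have "\<dots> \<le> 2 * h\<^sup>2 * (2 * G * (2 * P))" using SW by (intro mult_left_mono) auto
    also have "\<dots> \<le> 2 * d * (2 * G * (2 * P))" using h hh GP by (intro mult_right_mono) auto
    finally show ?thesis by (simp add: algebra_simps)
  qed
  have T: "\<bar>Tf y s - s\<bar> \<le> 16 * (G * P) * d" using R(5) t1 t2 unfolding S_def by argo
  have g: "\<bar>g1 s - g1 s0\<bar> \<le> Lg * d" using gL[OF si s0] mult_left_mono[OF s(2) nonneg(2)] by linarith
  have hS: "h * S \<le> d * (2 * G)" using h S nonneg by (intro mult_mono) auto
  have yy: "y - g1 s0 = (g1 s - g1 s0) + h * S" unfolding y_def S_def by simp
  have hS0: "0 \<le> h * S" using h S by simp
  have "d * (2 * G) = 2 * (G * d)" by simp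
  then have Y: "\<bar>y - g1 s0\<bar> \<le> Lg * d + 2 * (G * d)" unfolding yy using g hS hS0 by argo
  have dist: "dist (y, Tf y s) (g1 s0, s0) \<le> \<bar>y - g1 s0\<bar> + \<bar>Tf y s - s0\<bar>" by (rule dist_pair_le)
  have eqC: "Cst * d = Lg * d + 2 * (G * d) + 16 * (G * P) * d + d + Lp * d + 2 * (P * d)"
    by (simp add: Cst_def algebra_simps)
  have pos: "0 \<le> Lp * d" "0 \<le> P * d" using nonneg d by auto
  have D1: "dist (y, Tf y s) (g1 s0, s0) < e" using dist Y T s(2) eqC pos d(2) by argo
  have f: "\<bar>f1 s - f1 s0\<bar> \<le> Lp * d" using fL[OF si s0] mult_left_mono[OF s(2) nonneg(4)] by linarith
  have hW: "\<bar>W s * h\<bar> \<le> 2 * (P * d)"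
  proof -
    have "\<bar>W s * h\<bar> \<le> (2 * P) * d" using abs_prod_le[OF Wb, of h d] h by simp
    then show ?thesis by (simp add: algebra_simps)
  qed
  have D2: "\<bar>uD (y, Tf y s) - f1 s0\<bar> < e" unfolding R(4) using f hW eqC pos d(2) Y T nonneg d(1)
    by (smt (verit) abs_ge_zero)
  show ?thesis using R(3) D1 D2 by blast
qed

lemma AP2:
  assumes l0: "l0 \<in> {0..tb}" and e: "0 < e"
  shows "\<exists>p\<in>domD tb g1 g2. dist p (g2 l0, l0) < e \<and> \<bar>uD p - f2 l0\<bar> < e"
proof -
  obtain s0 where s0: "s0 \<in> {0..tb}" "lm s0 = l0" using lm_surj[OF l0] by blast
  define Cst where "Cst = 2 * G + 2 * Lg + 12 * (G * P) + 2 + 2 * P + 2 * Lp"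
  have Cst: "0 \<le> Cst" using nonneg by (simp add: Cst_def)
  define d where "d = e / (Cst + 1)"
  have d: "0 < d" "Cst * d < e" using small_eps[OF Cst e] by (simp_all add: d_def)
  obtain s where s: "s \<in> {0<..<tb}" "\<bar>s - s0\<bar> \<le> d" using near_open[OF s0(1) d(1)] by blast
  have si: "s \<in> {0..tb}" using s by auto
  have li: "lm s \<in> {0..tb}" using lm(1)[OF si] .
  define k where "k = min d (1/2)"
  have k: "0 < k" "k \<le> 1/2" "k \<le> d" using d by (auto simp: k_def)
  define h where "h = 1 - k"
  have h: "0 < h" "h < 1" using k by (auto simp: h_def)
  define y where "y = g1 s + h * Sg s"
  note R = ray[OF s(1) h(1,2) y_def]
  define S where "S = Sg s"
  define a where "a = f1 s"
  define c where "c = f2 (lm s)"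
  have S: "0 < S" "S \<le> 2 * G" using Sg_pos[OF s(1)] Sg_le[OF si] by (simp_all add: S_def)
  have a: "\<bar>a\<bar> \<le> P" using fb[OF si] by (simp add: a_def)
  have c: "\<bar>c\<bar> \<le> P" using fb[OF li] by (simp add: c_def)
  have Sa: "\<bar>S * a\<bar> \<le> 2 * G * P" using abs_prod_le[of S "2 * G" a P] S a by simp
  have Sc: "\<bar>S * c\<bar> \<le> 2 * G * P" using abs_prod_le[of S "2 * G" c P] S c by simp
  have GP: "0 \<le> G * P" using nonneg by simp
  have Wd: "W s = c - a" by (simp add: W_def a_def c_def)
  have lmid: "lm s = s - 2 * S * (a + c)" using lm_id[OF si] by (simp add: S_def Sg_def a_def c_def)
  have Tdiff: "Tf y s - lm s = 2 * k\<^sup>2 * (S * a) + 2 * (k * (2 - k)) * (S * c)"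
    unfolding R(5) lmid S_def[symmetric] a_def[symmetric] Wd h_def
    by (simp add: algebra_simps power2_eq_square)
  have kk: "k\<^sup>2 \<le> k" "k * (2 - k) \<le> 2 * k" using k by (auto simp: power2_eq_square mult_left_le_one_le)
  have t1: "\<bar>2 * k\<^sup>2 * (S * a)\<bar> \<le> 4 * (G * P) * d"
  proof -
    have "\<bar>2 * k\<^sup>2 * (S * a)\<bar> = 2 * k\<^sup>2 * \<bar>S * a\<bar>" by (simp add: abs_mult)
    also have "\<dots> \<le> 2 * k\<^sup>2 * (2 * G * P)" using Sa by (intro mult_left_mono) auto
    also have "\<dots> \<le> 2 * d * (2 * G * P)" using k kk GP by (intro mult_right_mono) auto
    finally show ?thesis by (simp add: algebra_simps)
  qed
  have t2: "\<bar>2 * (k * (2 - k)) * (S * c)\<bar> \<le> 8 * (G * P) * d"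
  proof -
    have k2: "0 \<le> k * (2 - k)" using k by simp
    have k2'': "0 \<le> 2 * (k * (2 - k))" using k2 by simp
    have "\<bar>2 * (k * (2 - k)) * (S * c)\<bar> = 2 * (k * (2 - k)) * \<bar>S * c\<bar>"
      unfolding abs_mult[of "2 * (k * (2 - k))" "S * c"] abs_of_nonneg[OF k2''] ..
    also have "\<dots> \<le> 2 * (k * (2 - k)) * (2 * G * P)" using Sc k2 by (intro mult_left_mono) auto
    also have "\<dots> \<le> 2 * (2 * d) * (2 * G * P)"
    proof -
      have "k * (2 - k) \<le> 2 * d" using kk(2) k(3) by linarith
      then show ?thesis using GP by (intro mult_right_mono) auto
    qed
    finally show ?thesis by (simp add: algebra_simps)
  qed
  have T: "\<bar>Tf y s - lm s\<bar> \<le> 12 * (G * P) * d" using Tdiff t1 t2 by argo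
  have dl: "\<bar>lm s - l0\<bar> \<le> 2 * d" using lm_est(1)[OF s0(1) si] s(2) s0(2) by simp
  have g: "\<bar>g2 (lm s) - g2 l0\<bar> \<le> Lg * (2 * d)"
    using gL[OF li l0] mult_left_mono[OF dl nonneg(2)] by linarith
  have ky: "y - g2 (lm s) = - (k * S)" unfolding y_def h_def S_def Sg_def by (simp add: algebra_simps)
  have kS: "k * S \<le> d * (2 * G)" using k S nonneg by (intro mult_mono) auto
  have kS0: "0 \<le> k * S" using k S by simp
  have "d * (2 * G) = 2 * (G * d)" by simp
  then have Y: "\<bar>y - g2 l0\<bar> \<le> 2 * (G * d) + 2 * (Lg * d)" using ky kS kS0 g by argo
  have dist: "dist (y, Tf y s) (g2 l0, l0) \<le> \<bar>y - g2 l0\<bar> + \<bar>Tf y s - l0\<bar>" by (rule dist_pair_le)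
  have eqC: "Cst * d = 2 * (G * d) + 2 * (Lg * d) + 12 * (G * P) * d + 2 * d + 2 * (P * d) + 2 * (Lp * d)"
    by (simp add: Cst_def algebra_simps)
  have pos: "0 \<le> Lp * d" "0 \<le> P * d" "0 \<le> G * d" "0 \<le> Lg * d" "0 \<le> G * P * d" using nonneg d by auto
  have D1: "dist (y, Tf y s) (g2 l0, l0) < e" using dist Y T dl eqC pos d(2) by argo
  have u: "uD (y, Tf y s) - f2 l0 = (a - c) * k + (f2 (lm s) - f2 (lm s0))"
    unfolding R(4) Wd h_def using s0(2) by (simp add: a_def c_def algebra_simps)
  have f: "\<bar>f2 (lm s) - f2 (lm s0)\<bar> \<le> 2 * (Lp * d)"
  proof -
    have "\<bar>f2 (lm s) - f2 (lm s0)\<bar> \<le> Lp * \<bar>lm s - lm s0\<bar>" using fL[OF li lm(1)[OF s0(1)]] by simp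
    also have "\<dots> \<le> Lp * (2 * d)" using dl s0(2) nonneg by (intro mult_left_mono) auto
    finally show ?thesis by simp
  qed
  have ac: "\<bar>(a - c) * k\<bar> \<le> 2 * (P * d)"
  proof -
    have "\<bar>a - c\<bar> \<le> 2 * P" using a c by linarith
    then have "\<bar>(a - c) * k\<bar> \<le> (2 * P) * d" using abs_prod_le[of "a - c" "2 * P" k d] k by simp
    then show ?thesis by (simp add: algebra_simps)
  qed
  have "0 \<le> 12 * (G * P) * d" using nonneg d by simp
  then have D2: "\<bar>uD (y, Tf y s) - f2 l0\<bar> < e" unfolding u using f ac eqC pos d by argo
  show ?thesis using R(3) D1 D2 by blast
qed

end

lemma near_open0: assumes "0 < (tb::real)" "s0 \<in> {0..tb}" "0 < d" shows "\<exists>s\<in>{0<..<tb}. \<bar>s - s0\<bar> \<le> d"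
proof -
  define d' where "d' = min d (tb / 4)"
  have d': "0 < d'" "d' \<le> d" "d' \<le> tb / 4" using assms by (auto simp: d'_def)
  show ?thesis
  proof (cases "s0 \<le> tb / 2")
    case True
    then show ?thesis using d' assms by (intro bexI[of _ "s0 + d'"]) auto
  next
    case False
    then show ?thesis using d' assms by (intro bexI[of _ "s0 - d'"]) auto
  qed
qed

lemma cont_approx:
  fixes f :: "real \<Rightarrow> real"
  assumes tb: "0 < tb" and c: "continuous_on {0..tb} f" and s: "s \<in> {0..tb}" and e: "0 < e"
  shows "\<exists>s'\<in>{0<..<tb}. dist s' s < e \<and> dist (f s') (f s) < e"
proof -
  obtain d where d: "0 < d" "\<forall>x'\<in>{0..tb}. dist x' s < d \<longrightarrow> dist (f x') (f s) < e"
    using c s e unfolding continuous_on_iff by blast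
  define d' where "d' = min d e / 2"
  have d': "0 < d'" "d' < d" "d' < e" using d e by (auto simp: d'_def)
  obtain s' where s': "s' \<in> {0<..<tb}" "\<bar>s' - s\<bar> \<le> d'" using near_open0[OF tb s d'(1)] by blast
  have "dist s' s < d" "dist s' s < e" using s' d' by (auto simp: dist_real_def)
  then show ?thesis using s' d by auto
qed

lemma bound_ext:
  fixes f :: "real \<Rightarrow> real"
  assumes tb: "0 < tb" and c: "continuous_on {0..tb} f" and b: "\<forall>s\<in>{0<..<tb}. \<bar>f s\<bar> \<le> M"
    and s: "s \<in> {0..tb}"
  shows "\<bar>f s\<bar> \<le> M"
proof (rule field_le_epsilon)
  fix e :: real assume e: "0 < e"
  obtain s' where "s' \<in> {0<..<tb}" "dist (f s') (f s) < e" using cont_approx[OF tb c s e] by blast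
  then show "\<bar>f s\<bar> \<le> M + e" using b unfolding dist_real_def by fastforce
qed

lemma lip_ext:
  fixes f :: "real \<Rightarrow> real"
  assumes tb: "0 < tb" and c: "continuous_on {0..tb} f" and l: "lipschitz_on L {0<..<tb} f"
  shows "lipschitz_on L {0..tb} f"
proof (rule approx_lip[of L "{0<..<tb}" f])
  show "0 \<le> L" using l by (rule lipschitz_on_nonneg)
  show "\<forall>x\<in>{0<..<tb}. \<forall>y\<in>{0<..<tb}. dist (f x) (f y) \<le> L * dist x y" using l by (auto simp: lipschitz_on_def)
  show "\<forall>x\<in>{0..tb}. \<forall>e>0. \<exists>x'\<in>{0<..<tb}. dist x' x < e \<and> dist (f x') (f x) < e"
    using cont_approx[OF tb c] by blast
qed

lemma lipc:
  assumes "\<exists>L. lipschitz_on L U f"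
  shows "lipschitz_on (Inf {L. lipschitz_on L U f}) U f"
proof -
  define S where "S = {L. lipschitz_on L U f}"
  have ne: "S \<noteq> {}" using assms by (auto simp: S_def)
  have nn: "0 \<le> Inf S" by (rule cInf_greatest[OF ne]) (auto simp: S_def lipschitz_on_def)
  have "dist (f x) (f y) \<le> Inf S * dist x y" if x: "x \<in> U" and y: "y \<in> U" for x y
  proof (cases "dist x y = 0")
    case True
    then show ?thesis using assms x y by (auto simp: lipschitz_on_def)
  next
    case False
    then have dp: "0 < dist x y" by simp
    have "dist (f x) (f y) / dist x y \<le> Inf S"
    proof (rule cInf_greatest[OF ne])
      fix L assume "L \<in> S"
      then have "dist (f x) (f y) \<le> L * dist x y" using x y by (auto simp: S_def lipschitz_on_def)
      then show "dist (f x) (f y) / dist x y \<le> L" using dp by (simp add: pos_divide_le_eq)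
    qed
    then show ?thesis using dp by (simp add: pos_divide_le_eq)
  qed
  then have "lipschitz_on (Inf S) U f" using nn unfolding lipschitz_on_def by blast
  then show ?thesis unfolding S_def .
qed

lemma sup_norm_ge:
  fixes f :: "real \<Rightarrow> real"
  assumes tb: "0 < tb" and c: "continuous_on {0..tb} f"
  shows "\<And>s. s \<in> {0<..<tb} \<Longrightarrow> \<bar>f s\<bar> \<le> sup_norm tb f" "0 \<le> sup_norm tb f"
proof -
  have "compact (f ` {0..tb})" by (rule compact_continuous_image[OF c]) simp
  then have "bounded (f ` {0..tb})" by (rule compact_imp_bounded)
  then obtain B where B: "\<forall>x\<in>{0..tb}. \<bar>f x\<bar> \<le> B" unfolding bounded_real by auto
  have bdd: "bdd_above ((\<lambda>s. \<bar>f s\<bar>) ` {0<..<tb})" using B by (auto intro!: bdd_aboveI[of _ B])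
  show 1: "\<bar>f s\<bar> \<le> sup_norm tb f" if "s \<in> {0<..<tb}" for s
    unfolding sup_norm_def by (rule cSUP_upper[OF that bdd])
  have "tb / 2 \<in> {0<..<tb}" using tb by simp
  from 1[OF this] show "0 \<le> sup_norm tb f" by linarith
qed

lemma sqrt_bound: "(sqrt 129 - 11) / 4 < (1/10::real)"
proof -
  have "sqrt 129 < sqrt ((57/5)\<^sup>2)" by (rule real_sqrt_less_mono) (simp add: power2_eq_square)
  then have "sqrt 129 < 57 / 5" by simp
  then show ?thesis by simp
qed

lemma hplane_mem: "((X::real), (Y::real), (Z::real)) \<in> hplane (x, y, t) \<longleftrightarrow> Z = 2 * y * X - 2 * x * Y"
proof -
  have "((X, Y, Z) \<in> hplane (x, y, t)) \<longleftrightarrow> (\<exists>k j. (X, Y, Z) - k *\<^sub>R (1, 0, 2 * y) = j *\<^sub>R (0, 1, - 2 * x))"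
    unfolding hplane_def by (simp add: span_insert span_singleton)
  also have "\<dots> \<longleftrightarrow> Z = 2 * y * X - 2 * x * Y"
    by (auto simp: algebra_simps)
  finally show ?thesis .
qed


lemma fun_bounds:
  fixes f :: "real \<Rightarrow> real"
  assumes tb: "0 < tb" and c: "continuous_on {0..tb} f" and l: "\<exists>L. lipschitz_on L {0<..<tb} f"
    and M: "sup_norm tb f \<le> M" and L: "lip_const tb f \<le> LL"
  shows "\<And>s. s \<in> {0..tb} \<Longrightarrow> \<bar>f s\<bar> \<le> M"
    "\<And>x y. x \<in> {0..tb} \<Longrightarrow> y \<in> {0..tb} \<Longrightarrow> \<bar>f x - f y\<bar> \<le> LL * \<bar>x - y\<bar>"
    "0 \<le> sup_norm tb f" "0 \<le> lip_const tb f"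
proof -
  show "\<bar>f s\<bar> \<le> M" if "s \<in> {0..tb}" for s
    by (rule bound_ext[OF tb c _ that]) (use sup_norm_ge(1)[OF tb c] M in fastforce)
  have lc: "lipschitz_on (lip_const tb f) {0<..<tb} f" unfolding lip_const_def by (rule lipc[OF l])
  have "lipschitz_on LL {0<..<tb} f" by (rule lipschitz_on_le[OF lc L])
  then have LL: "lipschitz_on LL {0..tb} f" by (rule lip_ext[OF tb c])
  show "\<bar>f x - f y\<bar> \<le> LL * \<bar>x - y\<bar>" if "x \<in> {0..tb}" "y \<in> {0..tb}" for x y
    using lipschitz_onD[OF LL that] by (simp add: dist_real_def)
  show "0 \<le> sup_norm tb f" by (rule sup_norm_ge(2)[OF tb c])
  show "0 \<le> lip_const tb f" by (rule lipschitz_on_nonneg[OF lc])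
qed

lemma alg_third:
  fixes l s a b c d h T X y :: real
  assumes "l = s - 2 * (d - b) * (a + c)" "T = s - 4 * h * ((d - b) * a) - 2 * h\<^sup>2 * ((d - b) * (c - a))"
    "X = a + (c - a) * h" "y = b + h * (d - b)"
  shows "(1 - h) * (s + 2 * b * a) + h * (l + 2 * d * c) = T + 2 * y * X"
  unfolding assms by (simp add: algebra_simps power2_eq_square)

theorem theorem3p1:
  fixes tb :: real and g1 g2 :: "real \<Rightarrow> real" and phi :: "real \<times> real \<Rightarrow> real"
  assumes tb: "tb > 0"
    and g1_lip: "\<exists>L. lipschitz_on L {0<..<tb} g1"
    and g2_lip: "\<exists>L. lipschitz_on L {0<..<tb} g2"
    and g1_cont: "continuous_on {0..tb} g1"
    and g2_cont: "continuous_on {0..tb} g2"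
    and sign: "\<And>t. t \<in> {0<..<tb} \<Longrightarrow> g1 t < 0 \<and> 0 < g2 t"
    and ends: "g1 0 = 0" "g1 tb = 0" "g2 0 = 0" "g2 tb = 0"
    and g1_convex: "convex_on {0..tb} g1"
    and g2_concave: "concave_on {0..tb} g2"
    and phi_cont: "continuous_on (frontier (domD tb g1 g2)) phi"
    and phi1_lip: "\<exists>L. lipschitz_on L {0<..<tb} (phi_i phi g1)"
    and phi2_lip: "\<exists>L. lipschitz_on L {0<..<tb} (phi_i phi g2)"
    and small: "zeta tb g1 g2 phi < (sqrt 129 - 11) / 4"
  shows "\<exists>u :: real \<times> real \<Rightarrow> real.
           R_phi tb g1 g2 phi = S_u (domD tb g1 g2) u
         \<and> (\<exists>L. lipschitz_on L (closure (domD tb g1 g2)) u)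
         \<and> (\<forall>q \<in> frontier (domD tb g1 g2). u q = phi q)"
proof -
  define D where "D = domD tb g1 g2"
  define f1 where "f1 = phi_i phi g1"
  define f2 where "f2 = phi_i phi g2"
  have g1o: "continuous_on {0<..<tb} g1" by (rule continuous_on_subset[OF g1_cont]) auto
  have g2o: "continuous_on {0<..<tb} g2" by (rule continuous_on_subset[OF g2_cont]) auto
  have Dopen: "open D"
  proof -
    define S where "S = (UNIV :: real set) \<times> {0<..<tb}"
    define F where "F = (\<lambda>p::real \<times> real. (fst p - g1 (snd p), g2 (snd p) - fst p))"
    have oS: "open S" unfolding S_def by (intro open_Times) auto
    have cs: "continuous_on S (\<lambda>p::real\<times>real. snd p)" by (intro continuous_intros)
    have c1: "continuous_on S (\<lambda>p. g1 (snd p))" by (rule continuous_on_compose2[OF g1o cs]) (auto simp: S_def)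
    have c2: "continuous_on S (\<lambda>p. g2 (snd p))" by (rule continuous_on_compose2[OF g2o cs]) (auto simp: S_def)
    have cF: "continuous_on S F" unfolding F_def by (intro continuous_intros c1 c2)
    have oT: "open ({0<..} \<times> {0<..} :: (real \<times> real) set)" by (intro open_Times) auto
    have "D = S \<inter> F -` ({0<..} \<times> {0<..})" unfolding D_def domD_def S_def F_def by auto
    then show ?thesis using continuous_open_preimage[OF cF oS oT] by simp
  qed
  define C where "C = {(y, t). t \<in> {0..tb} \<and> g1 t \<le> y \<and> y \<le> g2 t}"
  have Cclosed: "closed C"
  proof -
    define S where "S = (UNIV :: real set) \<times> {0..tb}"
    define F where "F = (\<lambda>p::real \<times> real. (fst p - g1 (snd p), g2 (snd p) - fst p))"
    have oS: "closed S" unfolding S_def by (intro closed_Times) auto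
    have cs: "continuous_on S (\<lambda>p::real\<times>real. snd p)" by (intro continuous_intros)
    have c1: "continuous_on S (\<lambda>p. g1 (snd p))" by (rule continuous_on_compose2[OF g1_cont cs]) (auto simp: S_def)
    have c2: "continuous_on S (\<lambda>p. g2 (snd p))" by (rule continuous_on_compose2[OF g2_cont cs]) (auto simp: S_def)
    have cF: "continuous_on S F" unfolding F_def by (intro continuous_intros c1 c2)
    have oT: "closed ({0..} \<times> {0..} :: (real \<times> real) set)" by (intro closed_Times) auto
    have "C = S \<inter> F -` ({0..} \<times> {0..})" unfolding C_def S_def F_def by auto
    then show ?thesis using continuous_closed_preimage[OF cF oS oT] by simp
  qed
  have DC: "D \<subseteq> C" unfolding D_def domD_def C_def by auto
  have closC: "closure D \<subseteq> C" by (rule closure_minimal[OF DC Cclosed])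
  have front: "frontier D = closure D - D" unfolding frontier_def interior_open[OF Dopen] ..
  have front_sub: "q \<in> frontier D \<Longrightarrow> (\<exists>t\<in>{0..tb}. q = (g1 t, t)) \<or> (\<exists>t\<in>{0..tb}. q = (g2 t, t))" for q
  proof -
    assume q: "q \<in> frontier D"
    obtain y t where qq: "q = (y, t)" by (cases q)
    have "q \<in> C" "q \<notin> D" using q closC front by auto
    then have yt: "t \<in> {0..tb}" "g1 t \<le> y" "y \<le> g2 t" "\<not> (t \<in> {0<..<tb} \<and> g1 t < y \<and> y < g2 t)"
      unfolding qq C_def D_def domD_def by auto
    show ?thesis
    proof (cases "t \<in> {0<..<tb}")
      case True
      then have "y = g1 t \<or> y = g2 t" using yt by auto
      then show ?thesis using yt(1) qq by auto
    next
      case False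
      then have "t = 0 \<or> t = tb" using yt(1) by auto
      then have "y = g1 t" using yt ends by auto
      then show ?thesis using yt(1) qq by auto
    qed
  qed
  have graph_in: "(g1 t, t) \<in> frontier D \<and> (g2 t, t) \<in> frontier D" if t: "t \<in> {0..tb}" for t
  proof -
    have n1: "(g1 t, t) \<notin> D" and n2: "(g2 t, t) \<notin> D" unfolding D_def domD_def by auto
    have c1: "(g1 t, t) \<in> closure D" and c2: "(g2 t, t) \<in> closure D"
    proof -
      have "(\<forall>e>0. \<exists>p\<in>D. dist p (g1 t, t) < e) \<and> (\<forall>e>0. \<exists>p\<in>D. dist p (g2 t, t) < e)"
      proof (cases "t \<in> {0<..<tb}")
        case True
        have st: "g1 t < g2 t" using sign[OF True] by linarith
        show ?thesis
        proof (intro conjI allI impI)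
          fix e :: real assume e: "0 < e"
          define d where "d = min (e / 2) ((g2 t - g1 t) / 2)"
          have d0: "0 < d" using e st unfolding d_def by simp
          have d1: "d \<le> e / 2" unfolding d_def by (rule min.cobounded1)
          have d2: "d \<le> (g2 t - g1 t) / 2" unfolding d_def by (rule min.cobounded2)
          have d: "0 < d" "d < e" "d < g2 t - g1 t" using d0 d1 d2 e st by argo+
          have "(g1 t + d, t) \<in> D" unfolding D_def domD_def using True d by auto
          moreover have "dist (g1 t + d, t) (g1 t, t) < e" using dist_pair_le[of "g1 t + d" t "g1 t" t] d by simp
          ultimately show "\<exists>p\<in>D. dist p (g1 t, t) < e" by blast
        next
          fix e :: real assume e: "0 < e"
          define d where "d = min (e / 2) ((g2 t - g1 t) / 2)"
          have d0: "0 < d" using e st unfolding d_def by simp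
          have d1: "d \<le> e / 2" unfolding d_def by (rule min.cobounded1)
          have d2: "d \<le> (g2 t - g1 t) / 2" unfolding d_def by (rule min.cobounded2)
          have d: "0 < d" "d < e" "d < g2 t - g1 t" using d0 d1 d2 e st by argo+
          have "(g2 t - d, t) \<in> D" unfolding D_def domD_def using True d by auto
          moreover have "dist (g2 t - d, t) (g2 t, t) < e" using dist_pair_le[of "g2 t - d" t "g2 t" t] d by simp
          ultimately show "\<exists>p\<in>D. dist p (g2 t, t) < e" by blast
        qed
      next
        case False
        then have t0: "t = 0 \<or> t = tb" using t by auto
        then have gg: "g1 t = 0" "g2 t = 0" using ends by auto
        have "\<exists>p\<in>D. dist p (0, t) < e" if e: "0 < e" for e
        proof -
          obtain t' where t': "t' \<in> {0<..<tb}" "\<bar>t' - t\<bar> \<le> e / 2" using near_open0[OF tb t, of "e/2"] e by auto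
          have "(0, t') \<in> D" unfolding D_def domD_def using t' sign[OF t'(1)] by auto
          moreover have "dist (0::real, t') (0, t) < e" using dist_pair_le[of 0 t' 0 t] t' e by simp
          ultimately show ?thesis by blast
        qed
        then show ?thesis using gg by simp
      qed
      then show "(g1 t, t) \<in> closure D" "(g2 t, t) \<in> closure D" unfolding closure_approachable by auto
    qed
    show ?thesis using c1 c2 n1 n2 front by auto
  qed
  have f1c: "continuous_on {0..tb} f1"
  proof -
    have "continuous_on {0..tb} (\<lambda>s. phi (g1 s, s))"
      by (rule continuous_on_compose2[OF phi_cont[folded D_def]]) (use graph_in in \<open>auto intro!: continuous_intros g1_cont\<close>)
    then show ?thesis by (simp add: f1_def phi_i_def)
  qed
  have f2c: "continuous_on {0..tb} f2"
  proof -
    have "continuous_on {0..tb} (\<lambda>s. phi (g2 s, s))"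
      by (rule continuous_on_compose2[OF phi_cont[folded D_def]]) (use graph_in in \<open>auto intro!: continuous_intros g2_cont\<close>)
    then show ?thesis by (simp add: f2_def phi_i_def)
  qed
  define G where "G = max (sup_norm tb g1) (sup_norm tb g2)"
  define Lg where "Lg = max (lip_const tb g1) (lip_const tb g2)"
  define P where "P = max (sup_norm tb f1) (sup_norm tb f2)"
  define Lp where "Lp = max (lip_const tb f1) (lip_const tb f2)"
  have zeq: "zeta tb g1 g2 phi = 4 * (G + Lg) * (P + Lp)"
    unfolding zeta_def G_def Lg_def P_def Lp_def f1_def f2_def ..
  note B1 = fun_bounds[OF tb g1_cont g1_lip, of G Lg] and B2 = fun_bounds[OF tb g2_cont g2_lip, of G Lg]
  note B3 = fun_bounds[OF tb f1c phi1_lip[folded f1_def], of P Lp]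
  note B4 = fun_bounds[OF tb f2c phi2_lip[folded f2_def], of P Lp]
  have nn: "0 \<le> G" "0 \<le> Lg" "0 \<le> P" "0 \<le> Lp"
    using B1(3,4) B3(3,4) by (auto simp: G_def Lg_def P_def Lp_def)
  have gb: "\<And>s. s \<in> {0..tb} \<Longrightarrow> \<bar>g1 s\<bar> \<le> G \<and> \<bar>g2 s\<bar> \<le> G"
    using B1(1) B2(1) by (auto simp: G_def Lg_def)
  have fb: "\<And>s. s \<in> {0..tb} \<Longrightarrow> \<bar>f1 s\<bar> \<le> P \<and> \<bar>f2 s\<bar> \<le> P"
    using B3(1) B4(1) by (auto simp: P_def Lp_def)
  have gL: "\<And>x y. x \<in> {0..tb} \<Longrightarrow> y \<in> {0..tb} \<Longrightarrow>
              \<bar>g1 x - g1 y\<bar> \<le> Lg * \<bar>x - y\<bar> \<and> \<bar>g2 x - g2 y\<bar> \<le> Lg * \<bar>x - y\<bar>"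
    using B1(2) B2(2) by (auto simp: G_def Lg_def)
  have fL: "\<And>x y. x \<in> {0..tb} \<Longrightarrow> y \<in> {0..tb} \<Longrightarrow>
              \<bar>f1 x - f1 y\<bar> \<le> Lp * \<bar>x - y\<bar> \<and> \<bar>f2 x - f2 y\<bar> \<le> Lp * \<bar>x - y\<bar>"
    using B3(2) B4(2) by (auto simp: P_def Lp_def)
  have fends: "f1 0 = f2 0" "f1 tb = f2 tb" using ends by (simp_all add: f1_def f2_def phi_i_def)
  have sm: "4 * (Lg * P + G * Lp) \<le> 1/10"
  proof -
    have "4 * (G + Lg) * (P + Lp) = 4 * (Lg * P + G * Lp) + 4 * (G * P) + 4 * (Lg * Lp)"
      by (simp add: algebra_simps)
    moreover have "0 \<le> G * P" "0 \<le> Lg * Lp" using nn by auto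
    ultimately show ?thesis using small zeq sqrt_bound by linarith
  qed
  interpret H: heis tb g1 g2 f1 f2 G Lg P Lp
    by unfold_locales (use tb g1_cont g2_cont f1c f2c gb fb gL fL ends fends sign g1_convex g2_concave nn sm in auto)
  have lam_eq: "lam tb g1 g2 phi s = H.lm s" if s: "s \<in> {0..tb}" for s
  proof -
    have "(p_i phi g2 l - p_i phi g1 s \<in> hplane (p_i phi g1 s)) \<longleftrightarrow> H.FF s l = 0" for l
    proof -
      have e: "(l + 2 * g2 l * f2 l - (s + 2 * g1 s * f1 s)) - (2 * g1 s * (f2 l - f1 s) - 2 * f1 s * (g2 l - g1 s))
            = H.FF s l"
        unfolding H.FF_def by (simp add: algebra_simps)
      have pd: "p_i phi g2 l - p_i phi g1 s = (f2 l - f1 s, g2 l - g1 s, (l + 2 * g2 l * f2 l) - (s + 2 * g1 s * f1 s))"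
        by (simp add: p_i_def f1_def f2_def)
      have p1: "p_i phi g1 s = (f1 s, g1 s, s + 2 * g1 s * f1 s)" by (simp add: p_i_def f1_def)
      have "(p_i phi g2 l - p_i phi g1 s \<in> hplane (p_i phi g1 s)) \<longleftrightarrow>
         (l + 2 * g2 l * f2 l - (s + 2 * g1 s * f1 s)) = (2 * g1 s * (f2 l - f1 s) - 2 * f1 s * (g2 l - g1 s))"
        by (subst pd, subst p1, rule hplane_mem)
      then show ?thesis using e by argo
    qed
    then show ?thesis unfolding lam_def H.lm_def by simp
  qed
  have rho_eq: "rho tb g1 g2 phi h s = (H.uD (y, H.Tf y s), y, H.Tf y s + 2 * y * H.uD (y, H.Tf y s))"
    if s: "s \<in> {0<..<tb}" and h: "0 < h" "h < 1" and y: "y = g1 s + h * H.Sg s" for h s y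
  proof -
    note R = H.ray[OF s h y]
    have si: "s \<in> {0..tb}" using s by auto
    define l where "l = H.lm s"
    have lam: "lam tb g1 g2 phi s = l" unfolding l_def by (rule lam_eq[OF si])
    have lid: "l = s - 2 * (g2 l - g1 s) * (f1 s + f2 l)" unfolding l_def by (rule H.lm_id[OF si])
    have T: "H.Tf y s = s - 4 * h * ((g2 l - g1 s) * f1 s) - 2 * h\<^sup>2 * ((g2 l - g1 s) * (f2 l - f1 s))"
      using R(5) by (simp add: H.Sg_def H.W_def l_def)
    have U: "H.uD (y, H.Tf y s) = f1 s + (f2 l - f1 s) * h" using R(4) by (simp add: H.W_def l_def)
    have Y: "y = g1 s + h * (g2 l - g1 s)" using y by (simp add: H.Sg_def l_def)
    have third: "(1 - h) * (s + 2 * g1 s * f1 s) + h * (l + 2 * g2 l * f2 l)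
      = H.Tf y s + 2 * y * H.uD (y, H.Tf y s)"
      by (rule alg_third[OF lid T U Y])
    have c1: "(1 - h) * f1 s + h * f2 l = H.uD (y, H.Tf y s)" unfolding U by (simp add: algebra_simps)
    have c2: "(1 - h) * g1 s + h * g2 l = y" unfolding Y by (simp add: algebra_simps)
    have pa: "p_i phi g1 s = (f1 s, g1 s, s + 2 * g1 s * f1 s)" by (simp add: p_i_def f1_def)
    have pb: "p_i phi g2 l = (f2 l, g2 l, l + 2 * g2 l * f2 l)" by (simp add: p_i_def f2_def)
    have rr: "rho tb g1 g2 phi h s = ((1 - h) * f1 s + h * f2 l, (1 - h) * g1 s + h * g2 l,
        (1 - h) * (s + 2 * g1 s * f1 s) + h * (l + 2 * g2 l * f2 l))"
      unfolding rho_def lam pa pb by simp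
    show ?thesis unfolding rr c1 c2 third ..
  qed
  define u where "u q = (if q \<in> D then H.uD q else phi q)" for q
  have RS: "R_phi tb g1 g2 phi = S_u D u"
  proof
    show "R_phi tb g1 g2 phi \<subseteq> S_u D u"
    proof
      fix x assume "x \<in> R_phi tb g1 g2 phi"
      then obtain h s where x: "x = rho tb g1 g2 phi h s" "h \<in> {0<..<1}" "s \<in> {0<..<tb}"
        unfolding R_phi_def by auto
      define y where "y = g1 s + h * H.Sg s"
      have h: "0 < h" "h < 1" using x by auto
      note R = H.ray[OF x(3) h y_def]
      have inD: "(y, H.Tf y s) \<in> D" using R(3) by (simp add: D_def)
      have "x = (u (y, H.Tf y s), y, H.Tf y s + 2 * y * u (y, H.Tf y s))"
        using rho_eq[OF x(3) h y_def] x(1) inD by (simp add: u_def)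
      then show "x \<in> S_u D u" unfolding S_u_def using inD by blast
    qed
  next
    show "S_u D u \<subseteq> R_phi tb g1 g2 phi"
    proof
      fix x assume "x \<in> S_u D u"
      then obtain y t where x: "x = (u (y, t), y, t + 2 * y * u (y, t))" "(y, t) \<in> D"
        unfolding S_u_def by auto
      have yt: "(y, t) \<in> domD tb g1 g2" using x(2) by (simp add: D_def)
      define s where "s = H.sg y t"
      note S = H.sg[OF yt, folded s_def]
      have Sp: "0 < H.Sg s" by (rule H.Sg_pos[OF S(1)])
      define h where "h = (y - g1 s) / H.Sg s"
      have h: "0 < h" "h < 1" using S(2,3) Sp unfolding h_def H.Sg_def by (auto simp: divide_less_eq_1_pos)
      have y: "y = g1 s + h * H.Sg s" using Sp by (simp add: h_def)
      have "rho tb g1 g2 phi h s = (H.uD (y, t), y, t + 2 * y * H.uD (y, t))"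
        using rho_eq[OF S(1) h y] S(4) by simp
      then have "x = rho tb g1 g2 phi h s" using x by (simp add: u_def)
      then show "x \<in> R_phi tb g1 g2 phi" unfolding R_phi_def using h S(1) by auto
    qed
  qed
  obtain L where L: "0 \<le> L" "\<forall>p\<in>domD tb g1 g2. \<forall>q\<in>domD tb g1 g2. dist (H.uD p) (H.uD q) \<le> L * dist p q"
    using H.uD_lip by blast
  have lip: "lipschitz_on L (closure D) u"
  proof (rule approx_lip[OF L(1), of D u])
    show "\<forall>x\<in>D. \<forall>y\<in>D. dist (u x) (u y) \<le> L * dist x y" using L(2) by (simp add: u_def D_def)
    show "\<forall>x\<in>closure D. \<forall>e>0. \<exists>x'\<in>D. dist x' x < e \<and> dist (u x') (u x) < e"
    proof (intro ballI allI impI)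
      fix x :: "real \<times> real" and e :: real assume x: "x \<in> closure D" and e: "0 < e"
      show "\<exists>x'\<in>D. dist x' x < e \<and> dist (u x') (u x) < e"
      proof (cases "x \<in> D")
        case True
        then show ?thesis using e by (intro bexI[of _ x]) auto
      next
        case False
        then have xf: "x \<in> frontier D" using x front by auto
        have ux: "u x = phi x" using False by (simp add: u_def)
        from front_sub[OF xf] show ?thesis
        proof
          assume "\<exists>t\<in>{0..tb}. x = (g1 t, t)"
          then obtain t where t: "t \<in> {0..tb}" "x = (g1 t, t)" by blast
          obtain p where p: "p \<in> domD tb g1 g2" "dist p (g1 t, t) < e" "\<bar>H.uD p - f1 t\<bar> < e"
            using H.AP1[OF t(1) e] by blast
          have "u p = H.uD p" using p(1) by (simp add: u_def D_def)
          moreover have "u x = f1 t" using ux t by (simp add: f1_def phi_i_def)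
          ultimately show ?thesis using p t by (auto simp: D_def dist_real_def)
        next
          assume "\<exists>t\<in>{0..tb}. x = (g2 t, t)"
          then obtain t where t: "t \<in> {0..tb}" "x = (g2 t, t)" by blast
          obtain p where p: "p \<in> domD tb g1 g2" "dist p (g2 t, t) < e" "\<bar>H.uD p - f2 t\<bar> < e"
            using H.AP2[OF t(1) e] by blast
          have "u p = H.uD p" using p(1) by (simp add: u_def D_def)
          moreover have "u x = f2 t" using ux t by (simp add: f2_def phi_i_def)
          ultimately show ?thesis using p t by (auto simp: D_def dist_real_def)
        qed
      qed
    qed
  qed
  have bd: "\<forall>q\<in>frontier D. u q = phi q" using front by (auto simp: u_def)
  show ?thesis using RS lip bd unfolding D_def by blast
qed

end
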